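(* Let $d\ge2$ and let $\mu$ be a continuous polynomial martingale on $\Delta^d$ with diffusion matrix $c^\mu_{ii}=\sum_{j\ne i}\gamma^\mu_{ij}\mu^i\mu^j$, $c^\mu_{ij}=-\gamma^\mu_{ij}\mu^i\mu^j$ ($i\ne j$), where $\gamma^\mu\in\mathbb{S}^d$ has zero diagonal and $\gamma^\mu_{ij}>0$ for all $i\ne j$ (i.e. $\mu$ is described by the admissible simplex parameter set $(0,0,\gamma^\mu)$). Then for every $T>0$, every $k\in\{1,\dots,d\}$ and every $\mu_0\in\mathring{\Delta}^d$, with positive probability $\mu^k_t=0$ for some $t\le T$.
   Context: $\Delta^d=\{x\in[0,1]^d:\sum_ix_i=1\}$, $\mathring{\Delta}^d$ its interior. A continuous polynomial martingale on $\Delta^d$ here means a polynomial diffusion (time-homogeneous Markovian Itô semimartingale with continuous paths) on $\Delta^d$ with zero drift and the stated quadratic diffusion matrix, i.e. the solution of the corresponding well-posed martingale problem. *)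

theory Defs
  imports "HOL-Probability.Probability"
begin

text \<open>The closed unit simplex in R^d (coordinates indexed by the finite type 'n, d = CARD('n)).\<close>
definition unit_simplex :: "(real ^ 'n) set" where
  "unit_simplex = {x. (\<forall>i. 0 \<le> x $ i) \<and> (\<Sum>i\<in>UNIV. x $ i) = 1}"

definition unit_simplex_interior :: "(real ^ 'n) set" where
  "unit_simplex_interior = {x. (\<forall>i. 0 < x $ i) \<and> (\<Sum>i\<in>UNIV. x $ i) = 1}"

definition is_filtration :: "'a measure \<Rightarrow> (real \<Rightarrow> 'a measure) \<Rightarrow> bool" where
  "is_filtration M F \<longleftrightarrow>
     (\<forall>t. subalgebra M (F t)) \<and>
     (\<forall>s t. 0 \<le> s \<longrightarrow> s \<le> t \<longrightarrow> sets (F s) \<subseteq> sets (F t))"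

definition is_martingale :: "'a measure \<Rightarrow> (real \<Rightarrow> 'a measure) \<Rightarrow> (real \<Rightarrow> 'a \<Rightarrow> real) \<Rightarrow> bool" where
  "is_martingale M F Y \<longleftrightarrow>
     (\<forall>t\<ge>0. integrable M (Y t) \<and> Y t \<in> borel_measurable (F t)) \<and>
     (\<forall>s t. 0 \<le> s \<longrightarrow> s \<le> t \<longrightarrow>
        (\<forall>A\<in>sets (F s). (LINT \<omega>:A|M. Y t \<omega>) = (LINT \<omega>:A|M. Y s \<omega>)))"

definition simplex_diffusion :: "('n \<Rightarrow> 'n \<Rightarrow> real) \<Rightarrow> real ^ 'n \<Rightarrow> 'n \<Rightarrow> 'n \<Rightarrow> real" where
  "simplex_diffusion \<gamma> x i j =
     (if i = j then (\<Sum>l\<in>UNIV - {i}. \<gamma> i l * x $ i * x $ l)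
      else - \<gamma> i j * x $ i * x $ j)"

text \<open>Since X is bounded and continuous, this is exactly: X is a continuous (local) martingale
  with quadratic covariation d<X^i,X^j>_t = c_ij(X_t) dt.\<close>
definition is_simplex_diffusion_martingale ::
  "'a measure \<Rightarrow> (real \<Rightarrow> 'a measure) \<Rightarrow> ('n \<Rightarrow> 'n \<Rightarrow> real) \<Rightarrow> (real \<Rightarrow> 'a \<Rightarrow> real ^ 'n) \<Rightarrow> bool" where
  "is_simplex_diffusion_martingale M F \<gamma> X \<longleftrightarrow>
     prob_space M \<and> is_filtration M F \<and>
     (\<forall>t\<ge>0. X t \<in> borel_measurable (F t)) \<and>
     (\<forall>\<omega>\<in>space M. continuous_on {0..} (\<lambda>t. X t \<omega>)) \<and>
     (\<forall>\<omega>\<in>space M. \<forall>t\<ge>0. X t \<omega> \<in> unit_simplex) \<and>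
     (\<forall>i. is_martingale M F (\<lambda>t \<omega>. X t \<omega> $ i)) \<and>
     (\<forall>i j. is_martingale M F
        (\<lambda>t \<omega>. X t \<omega> $ i * X t \<omega> $ j - integral {0..t} (\<lambda>s. simplex_diffusion \<gamma> (X s \<omega>) i j)))"

end

theory Submission
  imports Defs
begin

lemma integrable_bdd_mult:
  fixes h g :: "'a \<Rightarrow> real"
  assumes "integrable M g" "h \<in> borel_measurable M" "\<And>x. x \<in> space M \<Longrightarrow> \<bar>h x\<bar> \<le> B"
  shows "integrable M (\<lambda>x. h x * g x)"
proof -
  have gm: "g \<in> borel_measurable M" using assms(1) by (rule borel_measurable_integrable)
  have i: "integrable M (\<lambda>x. B * g x)" using assms(1) by simp
  have AE: "AE x in M. norm (h x * g x) \<le> norm (B * g x)"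
  proof (rule AE_I2)
    fix x assume x: "x \<in> space M"
    have "\<bar>h x\<bar> \<le> \<bar>B\<bar>" using assms(3)[OF x] by linarith
    hence "\<bar>h x\<bar> * \<bar>g x\<bar> \<le> \<bar>B\<bar> * \<bar>g x\<bar>" by (rule mult_right_mono) simp
    then show "norm (h x * g x) \<le> norm (B * g x)" by (simp add: abs_mult)
  qed
  have m: "(\<lambda>x. h x * g x) \<in> borel_measurable M" by (intro borel_measurable_times assms(2) gm)
  show ?thesis by (rule Bochner_Integration.integrable_bound[OF i m AE])
qed

lemma mart_mult:
  assumes P: "prob_space M" and Fl: "is_filtration M F" and Z: "is_martingale M F Z"
    and st: "0 \<le> s" "s \<le> t" and hm: "h \<in> borel_measurable (F s)"
    and hb: "\<And>x. x \<in> space M \<Longrightarrow> \<bar>h x\<bar> \<le> B"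
  shows "(\<integral>x. h x * Z t x \<partial>M) = (\<integral>x. h x * Z s x \<partial>M)"
proof -
  interpret prob_space M by fact
  have sub: "subalgebra M (F s)" using Fl unfolding is_filtration_def by auto
  interpret finite_measure_subalgebra M "F s" by unfold_locales (rule sub)
  have It: "integrable M (Z t)" and Is: "integrable M (Z s)" and Ms: "Z s \<in> borel_measurable (F s)"
    using Z st unfolding is_martingale_def by auto
  have hM: "h \<in> borel_measurable M" using measurable_from_subalg[OF sub hm] .
  have mart: "(LINT \<omega>:A|M. Z t \<omega>) = (LINT \<omega>:A|M. Z s \<omega>)" if "A \<in> sets (F s)" for A
    using Z st that unfolding is_martingale_def by blast
  have AE1: "AE x in M. real_cond_exp M (F s) (Z t) x = Z s x"
    by (rule real_cond_exp_charact[OF mart It Is Ms])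
  have i1: "integrable M (\<lambda>x. h x * Z t x)" by (rule integrable_bdd_mult[OF It hM hb])
  have "(\<integral>x. h x * Z t x \<partial>M) = (\<integral>x. h x * real_cond_exp M (F s) (Z t) x \<partial>M)"
    using real_cond_exp_intg(2)[OF i1 hm borel_measurable_integrable[OF It]] by simp
  also have "\<dots> = (\<integral>x. h x * Z s x \<partial>M)"
  proof (rule integral_cong_AE)
    show "(\<lambda>x. h x * real_cond_exp M (F s) (Z t) x) \<in> borel_measurable M"
      by (intro borel_measurable_times hM borel_measurable_cond_exp2)
    show "(\<lambda>x. h x * Z s x) \<in> borel_measurable M"
      by (intro borel_measurable_times hM borel_measurable_integrable[OF Is])
    show "AE x in M. h x * real_cond_exp M (F s) (Z t) x = h x * Z s x"
      using AE1 by (rule AE_mp) (rule AE_I2, simp)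
  qed
  finally show ?thesis .
qed


lemma exp_cubic_lower: "1 + x + x^2/2 - \<bar>x\<bar>^3/6 \<le> exp (x::real)"
proof -
  obtain t where "exp x = (\<Sum>m<4. (x ^ m) / fact m) + (exp t / fact 4) * x ^ 4"
    using Maclaurin_exp_le[of x 4] by blast
  moreover have "(\<Sum>m<4. (x ^ m) / fact m) = 1 + x + x^2/2 + x^3/6"
    by (simp add: numeral_eq_Suc lessThan_Suc fact_numeral)
  moreover have "0 \<le> (exp t / fact 4) * x ^ 4" by (simp add: zero_le_even_power')
  moreover have "- (\<bar>x\<bar>^3/6) \<le> x^3/6"
    by (cases "x \<ge> 0") (auto simp: abs_if power3_eq_cube)
  ultimately show ?thesis by linarith
qed

lemma exp_convex01: "0 \<le> y \<Longrightarrow> y \<le> 1 \<Longrightarrow> exp (\<eta> * y) \<le> 1 + (exp \<eta> - 1) * (y::real)"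
  using convex_onD[OF exp_convex, of y 0 \<eta>] by (simp add: algebra_simps)


lemma exp_le_lin: "0 \<le> \<eta> \<Longrightarrow> \<eta> \<le> 1 \<Longrightarrow> exp \<eta> - 1 \<le> 2 * (\<eta>::real)"
proof -
  assume h: "0 \<le> \<eta>" "\<eta> \<le> 1"
  have "\<eta> * exp 1 \<le> \<eta> * 3" using exp_le h by (intro mult_left_mono) auto
  then show ?thesis using exp_convex01[of \<eta> 1] h by (simp add: algebra_simps)
qed

lemma pathwise_shift:
  fixes y \<theta> \<eta> a \<kappa> :: real
  assumes y: "0 \<le> y" "y \<le> 1" and th: "0 \<le> \<theta>" and eta: "0 \<le> \<eta>" and a: "0 < a" "a < 1"
    and ka: "0 \<le> \<kappa>" and cond: "exp \<eta> - 1 \<le> \<kappa> * (1 - a)"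
  shows "exp (-\<theta>*y) - \<eta>*exp (-\<theta>*a)*y \<le> exp (-(\<theta>+\<eta>)*y) * (1 + \<kappa> * (y*(1-y)))"
proof (cases "y \<le> a")
  case True
  have "exp (\<eta>*y) \<le> 1 + (exp \<eta> - 1) * y" by (rule exp_convex01[OF y])
  also have "\<dots> \<le> 1 + \<kappa> * (1-a) * y" using cond y by (simp add: mult_right_mono)
  also have "\<dots> \<le> 1 + \<kappa> * (y*(1-y))"
    using True y ka by (simp add: mult_left_mono algebra_simps mult_right_mono)
  finally have h: "exp (\<eta>*y) \<le> 1 + \<kappa> * (y*(1-y))" .
  have "exp (-\<theta>*y) = exp (-(\<theta>+\<eta>)*y) * exp (\<eta>*y)" by (simp add: exp_add[symmetric] algebra_simps)
  also have "\<dots> \<le> exp (-(\<theta>+\<eta>)*y) * (1 + \<kappa> * (y*(1-y)))" using h by (simp add: mult_left_mono)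
  finally have h2: "exp (-\<theta>*y) \<le> exp (-(\<theta>+\<eta>)*y) * (1 + \<kappa> * (y*(1-y)))" .
  have "0 \<le> \<eta>*exp (-\<theta>*a)*y" using eta y by simp
  then show ?thesis using h2 by linarith
next
  case False
  have e1: "1 - \<eta>*y \<le> exp (-\<eta>*y)" using exp_ge_add_one_self[of "-\<eta>*y"] by simp
  have e2: "exp (-\<theta>*y) \<le> exp (-\<theta>*a)" using False th by (simp add: mult_left_mono)
  have "exp (-\<theta>*y) - \<eta>*exp (-\<theta>*a)*y \<le> exp (-\<theta>*y) - \<eta>*exp (-\<theta>*y)*y"
    using e2 eta y by (simp add: mult_left_mono mult_right_mono)
  also have "\<dots> = exp (-\<theta>*y) * (1 - \<eta>*y)" by (simp add: algebra_simps)
  also have "\<dots> \<le> exp (-\<theta>*y) * exp (-\<eta>*y)" using e1 by (simp add: mult_left_mono)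
  also have "\<dots> = exp (-(\<theta>+\<eta>)*y)" by (simp add: exp_add[symmetric] algebra_simps)
  also have "\<dots> \<le> exp (-(\<theta>+\<eta>)*y) * (1 + \<kappa> * (y*(1-y)))"
    using ka y by (simp add: mult_nonneg_nonneg)
  finally show ?thesis .
qed

lemma telescope_bound:
  fixes \<eta> a \<theta> :: real
  assumes "0 \<le> \<eta>" "0 < a" "a * \<eta> \<le> 1"
  shows "\<eta> * exp (-a*\<theta>) \<le> 3/a * (exp (-a*\<theta>) - exp (-a*(\<theta>+\<eta>)))"
proof -
  define x where "x = a*\<eta>"
  have x0: "0 \<le> x" "x \<le> 1" using assms unfolding x_def by auto
  have "(1 + x) * exp (-x) \<le> exp x * exp (-x)" by (rule mult_right_mono) auto
  hence h1: "x * exp (-x) \<le> 1 - exp (-x)" by (simp add: exp_minus_inverse algebra_simps)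
  have "exp (-1) \<le> exp (-x)" using x0 by simp
  moreover have "(1/3::real) \<le> exp (-1)" using exp_le by (simp add: exp_minus field_simps)
  ultimately have c: "1/3 \<le> exp (-x)" by linarith
  have "x * (1/3) \<le> x * exp (-x)" using x0 c by (intro mult_left_mono) auto
  with h1 have h2: "x/3 \<le> 1 - exp (-x)" by simp
  hence "x/3 * exp (-a*\<theta>) \<le> (1 - exp (-x)) * exp (-a*\<theta>)" by (simp add: mult_right_mono)
  also have "\<dots> = exp (-a*\<theta>) - exp (-a*(\<theta>+\<eta>))" unfolding x_def by (simp add: algebra_simps exp_add[symmetric])
  finally show ?thesis using assms unfolding x_def by (simp add: field_simps)
qed


locale M1 =
  fixes M :: "'a measure" and F :: "real \<Rightarrow> 'a measure" and Y A :: "real \<Rightarrow> 'a \<Rightarrow> real"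
    and y0 g :: real
  assumes prob: "prob_space M" and filt: "is_filtration M F"
    and mY: "is_martingale M F Y"
    and mQ: "is_martingale M F (\<lambda>t \<omega>. Y t \<omega> * Y t \<omega> - A t \<omega>)"
    and Ybd: "\<And>\<omega> t. \<omega> \<in> space M \<Longrightarrow> 0 \<le> t \<Longrightarrow> 0 \<le> Y t \<omega> \<and> Y t \<omega> \<le> 1"
    and Ycont: "\<And>\<omega>. \<omega> \<in> space M \<Longrightarrow> continuous_on {0..} (\<lambda>t. Y t \<omega>)"
    and Y0: "\<And>\<omega>. \<omega> \<in> space M \<Longrightarrow> Y 0 \<omega> = y0"
    and Alow: "\<And>\<omega> s t L. \<omega> \<in> space M \<Longrightarrow> 0 \<le> s \<Longrightarrow> s \<le> t \<Longrightarrow>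
        (\<And>r. r \<in> {s..t} \<Longrightarrow> L \<le> Y r \<omega> * (1 - Y r \<omega>)) \<Longrightarrow> g * (t - s) * L \<le> A t \<omega> - A s \<omega>"
    and gpos: "0 < g" and y0: "0 < y0" "y0 < 1"
begin

sublocale prob_space M by (rule prob)

lemma subF: "subalgebra M (F t)" using filt unfolding is_filtration_def by auto

lemma meas_mono: "0 \<le> s \<Longrightarrow> s \<le> t \<Longrightarrow> f \<in> borel_measurable (F s) \<Longrightarrow> f \<in> borel_measurable (F t)"
proof -
  assume a: "0 \<le> s" "s \<le> t" "f \<in> borel_measurable (F s)"
  have "subalgebra (F t) (F s)" using subF[of s] subF[of t] filt a unfolding is_filtration_def subalgebra_def by auto
  then show ?thesis using measurable_from_subalg a by blast
qed

lemma YF: "0 \<le> t \<Longrightarrow> Y t \<in> borel_measurable (F t)" using mY unfolding is_martingale_def by auto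
lemma YM[measurable]: "0 \<le> t \<Longrightarrow> Y t \<in> borel_measurable M" using measurable_from_subalg[OF subF YF] by blast
lemma QF: "0 \<le> t \<Longrightarrow> (\<lambda>\<omega>. Y t \<omega> * Y t \<omega> - A t \<omega>) \<in> borel_measurable (F t)" using mQ unfolding is_martingale_def by auto
lemma QI: "0 \<le> t \<Longrightarrow> integrable M (\<lambda>\<omega>. Y t \<omega> * Y t \<omega> - A t \<omega>)" using mQ unfolding is_martingale_def by auto
lemma AF: "0 \<le> t \<Longrightarrow> A t \<in> borel_measurable (F t)"
proof -
  assume t: "0 \<le> t"
  have "(\<lambda>\<omega>. Y t \<omega> * Y t \<omega> - (Y t \<omega> * Y t \<omega> - A t \<omega>)) \<in> borel_measurable (F t)"
    using YF[OF t] QF[OF t] by measurable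
  then show ?thesis by simp
qed
lemma AM[measurable]: "0 \<le> t \<Longrightarrow> A t \<in> borel_measurable M" using measurable_from_subalg[OF subF AF] by blast

lemma bint: "(f::'a\<Rightarrow>real) \<in> borel_measurable M \<Longrightarrow> (\<And>x. x \<in> space M \<Longrightarrow> \<bar>f x\<bar> \<le> (B::real)) \<Longrightarrow> integrable M f"
  by (rule integrable_const_bound[where B=B]) auto

lemma AI: "0 \<le> t \<Longrightarrow> integrable M (A t)"
proof -
  assume t: "0 \<le> t"
  have "integrable M (\<lambda>\<omega>. Y t \<omega> * Y t \<omega> - (Y t \<omega> * Y t \<omega> - A t \<omega>))"
    apply (rule Bochner_Integration.integrable_diff[OF _ QI[OF t]])
    apply (rule bint[where B=1]) using t Ybd by (auto simp: abs_mult intro!: mult_le_one)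
  then show ?thesis by (rule back_subst) (simp add: fun_eq_iff)
qed

lemma Yabs: "x \<in> space M \<Longrightarrow> 0 \<le> t \<Longrightarrow> \<bar>Y t x\<bar> \<le> 1" using Ybd[of x t] by auto

end

context M1 begin

lemma step:
  fixes s t \<theta> :: real and os :: "'a \<Rightarrow> real"
  assumes st: "0 \<le> s" "s \<le> t" and th: "0 \<le> \<theta>"
    and om[measurable]: "os \<in> borel_measurable M" and ob: "\<And>\<omega>. \<omega> \<in> space M \<Longrightarrow> 0 \<le> os \<omega> \<and> os \<omega> \<le> 1"
    and osc: "\<And>\<omega> r. \<omega> \<in> space M \<Longrightarrow> r \<in> {s..t} \<Longrightarrow> \<bar>Y r \<omega> - Y s \<omega>\<bar> \<le> os \<omega>"
  shows "(\<integral>\<omega>. exp (-\<theta>*Y s \<omega>) * (1 + g*\<theta>^2*(t-s)/2 * (Y s \<omega>*(1-Y s \<omega>))) \<partial>M)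
          - g*\<theta>^2*(t-s)/2 * (\<integral>\<omega>. os \<omega> \<partial>M) - \<theta>^3/6 * (\<integral>\<omega>. \<bar>Y t \<omega> - Y s \<omega>\<bar>^3 \<partial>M)
         \<le> (\<integral>\<omega>. exp (-\<theta>*Y t \<omega>) \<partial>M)"
proof -
  have t0: "0 \<le> t" using st by linarith
  define c where "c = g*\<theta>^2*(t-s)/2"
  have c0: "0 \<le> c" unfolding c_def using gpos st by simp
  define h where "h \<omega> = exp (-\<theta>*Y s \<omega>)" for \<omega>
  define D where "D \<omega> = Y t \<omega> - Y s \<omega>" for \<omega>
  have hF: "h \<in> borel_measurable (F s)" unfolding h_def using YF[OF st(1)] by measurable
  have hM[measurable]: "h \<in> borel_measurable M" using measurable_from_subalg[OF subF hF] .
  have DM[measurable]: "D \<in> borel_measurable M" unfolding D_def using st t0 by measurable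
  have Ys[measurable]: "Y s \<in> borel_measurable M" "Y t \<in> borel_measurable M" "A s \<in> borel_measurable M" "A t \<in> borel_measurable M"
    using st t0 by (auto intro: YM AM)
  have hb: "0 < h \<omega> \<and> h \<omega> \<le> 1" if "\<omega> \<in> space M" for \<omega>
    using Ybd[OF that st(1)] th unfolding h_def by (simp add: mult_nonneg_nonneg)
  have habs: "\<bar>h \<omega>\<bar> \<le> 1" if "\<omega> \<in> space M" for \<omega> using hb[OF that] by auto
  have Yb: "0 \<le> Y r \<omega> \<and> Y r \<omega> \<le> 1" if "\<omega> \<in> space M" "0 \<le> r" for \<omega> r using Ybd that by blast
  have Db: "\<bar>D \<omega>\<bar> \<le> 1" if "\<omega> \<in> space M" for \<omega>
    using Yb[OF that st(1)] Yb[OF that t0] unfolding D_def by auto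
  have E1: "(\<integral>\<omega>. h \<omega> * Y t \<omega> \<partial>M) = (\<integral>\<omega>. h \<omega> * Y s \<omega> \<partial>M)"
    by (rule mart_mult[OF prob filt mY st hF, of 1]) (use hb in fastforce)
  have hYF: "(\<lambda>\<omega>. h \<omega> * Y s \<omega>) \<in> borel_measurable (F s)" using hF YF[OF st(1)] by measurable
  have E2: "(\<integral>\<omega>. (h \<omega> * Y s \<omega>) * Y t \<omega> \<partial>M) = (\<integral>\<omega>. (h \<omega> * Y s \<omega>) * Y s \<omega> \<partial>M)"
    by (rule mart_mult[OF prob filt mY st hYF, of 1]) (use habs Yabs st in \<open>auto simp: abs_mult intro!: mult_le_one\<close>)
  have E3: "(\<integral>\<omega>. h \<omega> * (Y t \<omega> * Y t \<omega> - A t \<omega>) \<partial>M) = (\<integral>\<omega>. h \<omega> * (Y s \<omega> * Y s \<omega> - A s \<omega>) \<partial>M)"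
    by (rule mart_mult[OF prob filt mQ st hF, of 1]) (use hb in fastforce)
  have ihb: "integrable M (\<lambda>\<omega>. h \<omega> * f \<omega>)" if "integrable M f" for f
    by (rule integrable_bdd_mult[OF that hM, of 1]) (use hb in fastforce)
  have iQt: "integrable M (\<lambda>\<omega>. h \<omega> * (Y t \<omega> * Y t \<omega> - A t \<omega>))" by (rule ihb[OF QI[OF t0]])
  have iQs: "integrable M (\<lambda>\<omega>. h \<omega> * (Y s \<omega> * Y s \<omega> - A s \<omega>))" by (rule ihb[OF QI[OF st(1)]])
  have iAt: "integrable M (\<lambda>\<omega>. h \<omega> * A t \<omega>)" by (rule ihb[OF AI[OF t0]])
  have iAs: "integrable M (\<lambda>\<omega>. h \<omega> * A s \<omega>)" by (rule ihb[OF AI[OF st(1)]])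
  have i1: "integrable M (\<lambda>\<omega>. h \<omega> * Y t \<omega>)" "integrable M (\<lambda>\<omega>. h \<omega> * Y s \<omega>)"
    "integrable M (\<lambda>\<omega>. (h \<omega> * Y s \<omega>) * Y t \<omega>)" "integrable M (\<lambda>\<omega>. (h \<omega> * Y s \<omega>) * Y s \<omega>)"
    by (auto intro!: bint[where B=1] simp: abs_mult intro!: mult_le_one Yabs habs st t0)
  define low where "low \<omega> = - \<theta> * (h \<omega> * D \<omega>) + \<theta>^2/2 * (h \<omega> * (D \<omega>)^2 - h \<omega> * (A t \<omega> - A s \<omega>))" for \<omega>
  have lowid: "low \<omega> = - \<theta> * (h \<omega> * Y t \<omega> - h \<omega> * Y s \<omega>)
      + \<theta>^2/2 * ((h \<omega> * (Y t \<omega> * Y t \<omega> - A t \<omega>) - h \<omega> * (Y s \<omega> * Y s \<omega> - A s \<omega>))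
                 - 2 * ((h \<omega> * Y s \<omega>) * Y t \<omega> - (h \<omega> * Y s \<omega>) * Y s \<omega>))" for \<omega>
    unfolding low_def D_def by (simp add: algebra_simps power2_eq_square)
  have ilow: "integrable M low" unfolding lowid using iQt iQs i1 by simp
  have Ilow: "(\<integral>\<omega>. low \<omega> \<partial>M) = 0"
    unfolding lowid using iQt iQs i1 E1 E2 E3 by simp
  define big where "big \<omega> = exp (-\<theta>*Y t \<omega>) - h \<omega> * (1 + c * (Y s \<omega>*(1-Y s \<omega>))) + c * os \<omega> + \<theta>^3/6 * \<bar>D \<omega>\<bar>^3" for \<omega>
  have Ysb: "\<bar>Y s \<omega> * (1 - Y s \<omega>)\<bar> \<le> 1" if "\<omega> \<in> space M" for \<omega>
  proof -
    have a: "0 \<le> Y s \<omega>" "Y s \<omega> \<le> 1" using Yb[OF that st(1)] by auto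
    have "0 \<le> Y s \<omega> * (1 - Y s \<omega>)" using a by simp
    moreover have "Y s \<omega> * (1 - Y s \<omega>) \<le> 1" using a by (intro mult_le_one) auto
    ultimately show ?thesis by simp
  qed
  have i_e: "integrable M (\<lambda>\<omega>. exp (-\<theta>*Y t \<omega>))"
  proof (rule bint[where B=1])
    fix \<omega> assume w: "\<omega> \<in> space M"
    have "0 \<le> \<theta> * Y t \<omega>" using Yb[OF w t0] th by simp
    then show "\<bar>exp (-\<theta>*Y t \<omega>)\<bar> \<le> 1" by simp
  qed measurable
  have i_h: "integrable M (\<lambda>\<omega>. h \<omega> * (1 + c * (Y s \<omega>*(1-Y s \<omega>))))"
  proof (rule bint[where B="1 + c"])
    fix \<omega> assume w: "\<omega> \<in> space M"
    have "c * \<bar>Y s \<omega>*(1-Y s \<omega>)\<bar> \<le> c * 1"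
      using Ysb[OF w] c0 by (intro mult_left_mono) auto
    moreover have "\<bar>c * (Y s \<omega>*(1-Y s \<omega>))\<bar> = c * \<bar>Y s \<omega>*(1-Y s \<omega>)\<bar>"
      by (simp only: abs_mult[of c] abs_of_nonneg[OF c0])
    ultimately have "\<bar>c * (Y s \<omega>*(1-Y s \<omega>))\<bar> \<le> c * 1" by simp
    hence z: "\<bar>1 + c * (Y s \<omega>*(1-Y s \<omega>))\<bar> \<le> 1 + c" by linarith
    have "\<bar>h \<omega>\<bar> * \<bar>1 + c * (Y s \<omega>*(1-Y s \<omega>))\<bar> \<le> 1 * \<bar>1 + c * (Y s \<omega>*(1-Y s \<omega>))\<bar>"
      using habs[OF w] by (intro mult_right_mono) auto
    then show "\<bar>h \<omega> * (1 + c * (Y s \<omega> * (1 - Y s \<omega>)))\<bar> \<le> 1 + c"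
      using z by (simp add: abs_mult)
  qed measurable
  have i_o: "integrable M os" by (rule bint[where B=1]) (use ob in auto)
  have i_D: "integrable M (\<lambda>\<omega>. \<bar>D \<omega>\<bar>^3)"
  proof (rule bint[where B=1])
    fix \<omega> assume w: "\<omega> \<in> space M"
    show "\<bar>\<bar>D \<omega>\<bar>^3\<bar> \<le> 1" using Db[OF w] by (simp add: power_le_one)
  qed measurable
  have ibig: "integrable M big" unfolding big_def using i_e i_h i_o i_D by simp
  have pw: "low \<omega> \<le> big \<omega>" if w: "\<omega> \<in> space M" for \<omega>
  proof -
    define x where "x = -\<theta> * D \<omega>"
    have ex: "exp (-\<theta>*Y t \<omega>) = h \<omega> * exp x" unfolding x_def h_def D_def
      by (simp add: exp_add[symmetric] algebra_simps)
    have l: "1 + x + x^2/2 - \<bar>x\<bar>^3/6 \<le> exp x" by (rule exp_cubic_lower)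
    have h0: "0 \<le> h \<omega>" "h \<omega> \<le> 1" using hb[OF w] by auto
    have "h \<omega> * (1 + x + x^2/2 - \<bar>x\<bar>^3/6) \<le> h \<omega> * exp x" using l h0(1) by (rule mult_left_mono)
    moreover have "h \<omega> * (\<bar>x\<bar>^3/6) \<le> \<bar>x\<bar>^3/6" using h0 by (intro mult_left_le_one_le) auto
    moreover have "\<bar>x\<bar>^3 = \<theta>^3 * \<bar>D \<omega>\<bar>^3" unfolding x_def using th by (simp add: abs_mult power_mult_distrib)
    moreover have "h \<omega> * (1 + x + x^2/2 - \<bar>x\<bar>^3/6) = h \<omega> - \<theta> * (h \<omega> * D \<omega>) + \<theta>^2/2 * (h \<omega> * (D \<omega>)^2) - h \<omega> * (\<bar>x\<bar>^3/6)"
      unfolding x_def by (simp add: algebra_simps power2_eq_square)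
    ultimately have f1: "h \<omega> - \<theta> * (h \<omega> * D \<omega>) + \<theta>^2/2 * (h \<omega> * (D \<omega>)^2) - \<theta>^3/6 * \<bar>D \<omega>\<bar>^3 \<le> exp (-\<theta>*Y t \<omega>)"
      unfolding ex by linarith
    define L where "L = Y s \<omega> * (1 - Y s \<omega>) - os \<omega>"
    have "L \<le> Y r \<omega> * (1 - Y r \<omega>)" if r: "r \<in> {s..t}" for r
    proof -
      have r0: "0 \<le> r" using r st by auto
      have "\<bar>(Y r \<omega> - Y s \<omega>) * (1 - Y r \<omega> - Y s \<omega>)\<bar> \<le> \<bar>Y r \<omega> - Y s \<omega>\<bar>"
        unfolding abs_mult by (rule mult_right_le_one_le) (use Yb[OF w r0] Yb[OF w st(1)] in auto)
      moreover have "Y r \<omega> * (1 - Y r \<omega>) - Y s \<omega> * (1 - Y s \<omega>) = (Y r \<omega> - Y s \<omega>) * (1 - Y r \<omega> - Y s \<omega>)"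
        by (simp add: algebra_simps)
      ultimately show ?thesis unfolding L_def using osc[OF w r] by linarith
    qed
    then have AL: "g * (t - s) * L \<le> A t \<omega> - A s \<omega>" by (intro Alow[OF w st]) auto
    have "h \<omega> * (g * (t - s) * L) \<le> h \<omega> * (A t \<omega> - A s \<omega>)" using AL h0(1) by (rule mult_left_mono)
    hence "\<theta>^2/2 * (h \<omega> * (g * (t - s) * L)) \<le> \<theta>^2/2 * (h \<omega> * (A t \<omega> - A s \<omega>))" by (simp add: mult_left_mono)
    moreover have "\<theta>^2/2 * (h \<omega> * (g * (t - s) * L)) = c * (h \<omega> * (Y s \<omega> * (1 - Y s \<omega>))) - c * (h \<omega> * os \<omega>)"
      unfolding c_def L_def by (simp add: field_simps)
    moreover have "c * (h \<omega> * os \<omega>) \<le> c * os \<omega>"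
      using c0 h0 ob[OF w] by (intro mult_left_mono mult_left_le_one_le) auto
    ultimately have f2: "c * (h \<omega> * (Y s \<omega> * (1 - Y s \<omega>))) - c * os \<omega> \<le> \<theta>^2/2 * (h \<omega> * (A t \<omega> - A s \<omega>))"
      by linarith
    have f3: "h \<omega> * (1 + c * (Y s \<omega>*(1-Y s \<omega>))) = h \<omega> + c * (h \<omega> * (Y s \<omega> * (1 - Y s \<omega>)))"
      by (simp add: algebra_simps)
    have f4: "low \<omega> = - \<theta> * (h \<omega> * D \<omega>) + \<theta>^2/2 * (h \<omega> * (D \<omega>)^2) - \<theta>^2/2 * (h \<omega> * (A t \<omega> - A s \<omega>))"
      unfolding low_def by (simp add: algebra_simps)
    show ?thesis unfolding big_def f3 f4 using f1 f2 by linarith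
  qed
  have "0 \<le> (\<integral>\<omega>. big \<omega> \<partial>M)" using integral_mono[OF ilow ibig pw] Ilow by simp
  moreover have "(\<integral>\<omega>. big \<omega> \<partial>M) = (\<integral>\<omega>. exp (-\<theta>*Y t \<omega>) \<partial>M) - (\<integral>\<omega>. h \<omega> * (1 + c * (Y s \<omega>*(1-Y s \<omega>))) \<partial>M) + c * (\<integral>\<omega>. os \<omega> \<partial>M) + \<theta>^3/6 * (\<integral>\<omega>. \<bar>Y t \<omega> - Y s \<omega>\<bar>^3 \<partial>M)"
    unfolding big_def using i_e i_h i_o i_D by (simp add: D_def)
  ultimately show ?thesis unfolding c_def h_def by simp
qed

end

lemma dense_cont_le:
  fixes f :: "real \<Rightarrow> real"
  assumes st: "s < t" and fc: "continuous_on {s..t} f" and le: "\<And>q. q \<in> {s..t} \<inter> \<rat> \<Longrightarrow> f q \<le> B"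
    and r: "r \<in> {s..t}"
  shows "f r \<le> B"
proof -
  let ?S = "{s..t} \<inter> \<rat>"
  have "{s<..<t} \<inter> closure \<rat> \<subseteq> closure ({s<..<t} \<inter> \<rat>)" by (rule open_Int_closure_subset) simp
  hence "{s<..<t} \<subseteq> closure ({s<..<t} \<inter> \<rat>)" by (simp add: Rats_closure_real)
  also have "\<dots> \<subseteq> closure ?S" by (rule closure_mono) auto
  finally have "closure {s<..<t} \<subseteq> closure ?S" by (metis closure_closure closure_mono)
  hence rS: "r \<in> closure ?S" using r st by auto
  have "closure ?S \<subseteq> {s..t}" by (metis closure_closed closed_atLeastAtMost closure_mono inf_le1)
  hence "continuous_on (closure ?S) f" using fc continuous_on_subset by blast
  then show ?thesis by (rule continuous_le_on_closure[OF _ rS]) (rule le)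
qed

context M1 begin

definition oscf :: "real \<Rightarrow> real \<Rightarrow> 'a \<Rightarrow> real" where
  "oscf s t \<omega> = (SUP r \<in> ({s..t} \<inter> \<rat>) \<union> {t}. \<bar>Y r \<omega> - Y s \<omega>\<bar>)"

lemma Ydiff: "\<omega> \<in> space M \<Longrightarrow> 0 \<le> r \<Longrightarrow> 0 \<le> s \<Longrightarrow> \<bar>Y r \<omega> - Y s \<omega>\<bar> \<le> 1"
  using Ybd[of \<omega> r] Ybd[of \<omega> s] by auto

lemma osc_bdd: "\<omega> \<in> space M \<Longrightarrow> 0 \<le> s \<Longrightarrow> s \<le> t \<Longrightarrow> bdd_above ((\<lambda>r. \<bar>Y r \<omega> - Y s \<omega>\<bar>) ` (({s..t} \<inter> \<rat>) \<union> {t}))"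
  by (rule bdd_aboveI[where M=1]) (auto intro!: Ydiff)

lemma osc_meas[measurable]: "0 \<le> s \<Longrightarrow> s \<le> t \<Longrightarrow> oscf s t \<in> borel_measurable M"
  unfolding oscf_def
proof (rule borel_measurable_cSUP)
  assume s: "0 \<le> s" "s \<le> t"
  show "countable (({s..t} \<inter> \<rat>) \<union> {t})" by (simp add: countable_Int2 countable_rat)
  fix r assume "r \<in> ({s..t} \<inter> \<rat>) \<union> {t}"
  hence r0: "0 \<le> r" using s by auto
  show "(\<lambda>x. \<bar>Y r x - Y s x\<bar>) \<in> borel_measurable M" using YM[OF r0] YM[OF s(1)] by measurable
next
  fix \<omega> assume a: "0 \<le> s" "s \<le> t" "\<omega> \<in> space M"
  show "bdd_above ((\<lambda>r. \<bar>Y r \<omega> - Y s \<omega>\<bar>) ` (({s..t} \<inter> \<rat>) \<union> {t}))" by (rule osc_bdd[OF a(3,1,2)])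
qed

lemma osc_upper: "\<omega> \<in> space M \<Longrightarrow> 0 \<le> s \<Longrightarrow> s \<le> t \<Longrightarrow> r \<in> {s..t} \<Longrightarrow> \<bar>Y r \<omega> - Y s \<omega>\<bar> \<le> oscf s t \<omega>"
proof -
  assume w: "\<omega> \<in> space M" and s: "0 \<le> s" "s \<le> t" and r: "r \<in> {s..t}"
  have up: "\<bar>Y q \<omega> - Y s \<omega>\<bar> \<le> oscf s t \<omega>" if "q \<in> ({s..t} \<inter> \<rat>) \<union> {t}" for q
    unfolding oscf_def by (rule cSUP_upper[OF that osc_bdd[OF w s]])
  show ?thesis
  proof (cases "s < t")
    case True
    have "continuous_on {s..t} (\<lambda>r. Y r \<omega>)" using Ycont[OF w] by (rule continuous_on_subset) (use s in auto)
    hence "continuous_on {s..t} (\<lambda>r. \<bar>Y r \<omega> - Y s \<omega>\<bar>)" by (intro continuous_intros)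
    then show ?thesis using dense_cont_le[OF True _ _ r] up by blast
  next
    case False
    hence "r = t" using r s by auto
    then show ?thesis using up by auto
  qed
qed

lemma osc_nonneg: "\<omega> \<in> space M \<Longrightarrow> 0 \<le> s \<Longrightarrow> s \<le> t \<Longrightarrow> 0 \<le> oscf s t \<omega>"
  using osc_upper[of \<omega> s t t] by (meson abs_ge_zero atLeastAtMost_iff order.trans order_refl)

lemma osc_least: "\<omega> \<in> space M \<Longrightarrow> 0 \<le> s \<Longrightarrow> s \<le> t \<Longrightarrow> (\<And>r. r \<in> {s..t} \<Longrightarrow> \<bar>Y r \<omega> - Y s \<omega>\<bar> \<le> e) \<Longrightarrow> oscf s t \<omega> \<le> e"
  unfolding oscf_def by (rule cSUP_least) auto

lemma osc_le1: "\<omega> \<in> space M \<Longrightarrow> 0 \<le> s \<Longrightarrow> s \<le> t \<Longrightarrow> oscf s t \<omega> \<le> 1"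
  by (rule osc_least) (auto intro!: Ydiff)

end

lemma telescope_ineq:
  fixes u r :: "nat \<Rightarrow> real"
  assumes "\<And>i. i < n \<Longrightarrow> u i - r i \<le> u (Suc i)"
  shows "u 0 - (\<Sum>i<n. r i) \<le> u n"
  using assms
proof (induction n)
  case 0 then show ?case by simp
next
  case (Suc n)
  have "u 0 - (\<Sum>i<n. r i) \<le> u n" using Suc by auto
  moreover have "u n - r n \<le> u (Suc n)" using Suc by auto
  ultimately show ?case by simp
qed

definition ttg :: "real \<Rightarrow> nat \<Rightarrow> nat \<Rightarrow> real" where "ttg \<tau> n i = real i * \<tau> / real n"
definition thg :: "real \<Rightarrow> real \<Rightarrow> real \<Rightarrow> nat \<Rightarrow> nat \<Rightarrow> real" where
  "thg lm c \<tau> n i = 1/(1/lm + c*(\<tau> - ttg \<tau> n i))"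

lemma theta_facts:
  fixes \<tau> lm c :: real and n i :: nat
  assumes \<tau>: "0 < \<tau>" and n: "0 < n" and lam: "0 < lm" and c: "0 < c" and i: "i < n"
  defines "tt \<equiv> ttg \<tau> n" and "\<theta> \<equiv> thg lm c \<tau> n"
  shows "0 < \<theta> i" "\<theta> i \<le> \<theta> (Suc i)" "\<theta> (Suc i) \<le> lm"
    "\<theta> (Suc i) - \<theta> i = c * (\<tau>/n) * \<theta> i * \<theta> (Suc i)"
    "0 \<le> tt i" "tt (Suc i) - tt i = \<tau>/n" "\<theta> n = lm" "tt n = \<tau>" "tt 0 = 0"
proof -
  have tle: "tt j \<le> \<tau>" if "j \<le> n" for j
  proof -
    have "real j * \<tau> \<le> real n * \<tau>" using that \<tau> by (intro mult_right_mono) auto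
    then show ?thesis unfolding tt_def ttg_def using n by (simp add: field_simps)
  qed
  have dpos: "0 < 1/lm + c*(\<tau> - tt j)" if "j \<le> n" for j
    using tle[OF that] c lam by (simp add: add_pos_nonneg)
  show "0 < \<theta> i" unfolding \<theta>_def thg_def tt_def[symmetric] using dpos[of i] i by simp
  show tsuc: "tt (Suc i) - tt i = \<tau>/n" unfolding tt_def ttg_def by (simp add: diff_divide_distrib[symmetric] algebra_simps)
  show "0 \<le> tt i" unfolding tt_def ttg_def using \<tau> by simp
  show "\<theta> n = lm" "tt n = \<tau>" "tt 0 = 0" unfolding \<theta>_def thg_def tt_def ttg_def using n by auto
  define d0 where "d0 = 1/lm + c*(\<tau> - tt i)"
  define d1 where "d1 = 1/lm + c*(\<tau> - tt (Suc i))"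
  have d0: "0 < d0" unfolding d0_def using dpos[of i] i by simp
  have d1: "0 < d1" unfolding d1_def using dpos[of "Suc i"] i by simp
  have dd: "d0 - d1 = c * (\<tau>/n)" unfolding d0_def d1_def using tsuc by (simp add: algebra_simps)
  have "0 \<le> c * (\<tau>/n)" using c \<tau> by simp
  hence "d1 \<le> d0" using dd by linarith
  then show "\<theta> i \<le> \<theta> (Suc i)" unfolding \<theta>_def thg_def tt_def[symmetric] d0_def[symmetric] d1_def[symmetric] using d1
    by (simp add: frac_le)
  have "1/lm \<le> d1" unfolding d1_def using tle[of "Suc i"] i c by simp
  then show "\<theta> (Suc i) \<le> lm" unfolding \<theta>_def thg_def tt_def[symmetric] d1_def[symmetric] using lam
    by (metis \<open>0 < d1\<close> inverse_eq_divide inverse_inverse_eq le_imp_inverse_le zero_less_divide_1_iff)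
  show "\<theta> (Suc i) - \<theta> i = c * (\<tau>/n) * \<theta> i * \<theta> (Suc i)"
    unfolding \<theta>_def thg_def tt_def[symmetric] d0_def[symmetric] d1_def[symmetric] dd[symmetric] using d0 d1
    by (simp add: field_simps)
qed


context M1 begin

lemma EY: "0 \<le> t \<Longrightarrow> (\<integral>\<omega>. Y t \<omega> \<partial>M) = y0"
proof -
  assume t: "0 \<le> t"
  have "(\<integral>\<omega>. 1 * Y t \<omega> \<partial>M) = (\<integral>\<omega>. 1 * Y 0 \<omega> \<partial>M)"
    by (rule mart_mult[OF prob filt mY _ t, where h="\<lambda>_. 1" and B=1]) auto
  also have "\<dots> = (\<integral>\<omega>. y0 \<partial>M)" by (intro Bochner_Integration.integral_cong) (auto simp: Y0)
  finally show ?thesis by (simp add: prob_space)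
qed

lemma YI: "0 \<le> t \<Longrightarrow> integrable M (Y t)" using mY unfolding is_martingale_def by auto

lemma expY_int: "0 \<le> t \<Longrightarrow> 0 \<le> \<theta> \<Longrightarrow> integrable M (\<lambda>\<omega>. exp (-\<theta> * Y t \<omega>))"
proof (rule bint[where B=1])
  fix \<omega> assume t: "0 \<le> t" and th: "0 \<le> \<theta>" and w: "\<omega> \<in> space M"
  have "0 \<le> \<theta> * Y t \<omega>" using Ybd[OF w t] th by simp
  then show "\<bar>exp (-\<theta>*Y t \<omega>)\<bar> \<le> 1" by simp
qed measurable

lemma grid_bound:
  fixes \<tau> lm a :: real and n :: nat
  assumes \<tau>: "0 < \<tau>" and n: "0 < n" and lam: "0 < lm" and a: "0 < a" "a < 1"
    and small: "g*(1-a)/4 * (\<tau>/n) * lm^2 \<le> 1"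
  defines "tt \<equiv> ttg \<tau> n" and "\<theta> \<equiv> thg lm (g*(1-a)/4) \<tau> n"
  shows "exp (-\<theta> 0 * y0) - y0 * (3/a) * exp (-a * \<theta> 0)
           - g*lm^2/2*(\<tau>/n) * (\<Sum>i<n. \<integral>\<omega>. oscf (tt i) (tt (Suc i)) \<omega> \<partial>M)
           - lm^3/6 * (\<Sum>i<n. \<integral>\<omega>. \<bar>Y (tt (Suc i)) \<omega> - Y (tt i) \<omega>\<bar>^3 \<partial>M)
         \<le> (\<integral>\<omega>. exp (-lm * Y \<tau> \<omega>) \<partial>M)"
proof -
  define c where "c = g*(1-a)/4"
  have c0: "0 < c" unfolding c_def using gpos a by simp
  have \<theta>c: "\<theta> = thg lm c \<tau> n" unfolding \<theta>_def c_def ..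
  note TF = theta_facts[OF \<tau> n lam c0]
  define \<eta> where "\<eta> i = \<theta> (Suc i) - \<theta> i" for i
  define \<kappa> where "\<kappa> i = g * (\<theta> (Suc i))^2 * (tt (Suc i) - tt i)/2" for i
  define u where "u i = (\<integral>\<omega>. exp (-\<theta> i * Y (tt i) \<omega>) \<partial>M)" for i
  define EO where "EO i = (\<integral>\<omega>. oscf (tt i) (tt (Suc i)) \<omega> \<partial>M)" for i
  define ED where "ED i = (\<integral>\<omega>. \<bar>Y (tt (Suc i)) \<omega> - Y (tt i) \<omega>\<bar>^3 \<partial>M)" for i
  have step_i: "u i - (\<eta> i * exp (-\<theta> i * a) * y0 + \<kappa> i * EO i + (\<theta> (Suc i))^3/6 * ED i) \<le> u (Suc i)"
    if i: "i < n" for i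
  proof -
    have th0: "0 < \<theta> i" and thle: "\<theta> i \<le> \<theta> (Suc i)" and thl: "\<theta> (Suc i) \<le> lm"
      and eq: "\<theta> (Suc i) - \<theta> i = c * (\<tau>/n) * \<theta> i * \<theta> (Suc i)" and t0: "0 \<le> tt i"
      and ts: "tt (Suc i) - tt i = \<tau>/n" using TF[OF i] unfolding \<theta>c tt_def by auto
    have "0 \<le> \<tau>/n" using \<tau> by simp
    hence tle: "tt i \<le> tt (Suc i)" using ts by linarith
    have k0: "0 \<le> \<kappa> i" unfolding \<kappa>_def using gpos tle by simp
    have e0: "0 \<le> \<eta> i" unfolding \<eta>_def using thle by simp
    have p: "\<theta> i * \<theta> (Suc i) \<le> lm * lm" using thle thl th0 by (intro mult_mono) auto
    have q: "0 \<le> c*(\<tau>/n)" using c0 \<tau> by simp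
    have "c*(\<tau>/n)*(\<theta> i * \<theta> (Suc i)) \<le> c*(\<tau>/n)*(lm * lm)" using mult_left_mono[OF p q] .
    hence "\<eta> i \<le> c * (\<tau>/n) * lm * lm" unfolding \<eta>_def eq by (simp add: mult.assoc)
    also have "\<dots> \<le> 1" using small unfolding c_def by (simp add: power2_eq_square mult.assoc)
    finally have e1: "\<eta> i \<le> 1" .
    have "exp (\<eta> i) - 1 \<le> 2 * \<eta> i" by (rule exp_le_lin[OF e0 e1])
    also have "\<dots> = 2 * c * (\<tau>/n) * \<theta> i * \<theta> (Suc i)" unfolding \<eta>_def eq by simp
    also have "\<dots> \<le> 2 * c * (\<tau>/n) * \<theta> (Suc i) * \<theta> (Suc i)"
      using thle th0 c0 \<tau> by (intro mult_right_mono mult_left_mono) auto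
    also have "\<dots> = \<kappa> i * (1 - a)" unfolding \<kappa>_def c_def ts using n by (simp add: power2_eq_square field_simps)
    finally have cond: "exp (\<eta> i) - 1 \<le> \<kappa> i * (1 - a)" .
    have ST: "(\<integral>\<omega>. exp (-\<theta> (Suc i)*Y (tt i) \<omega>) * (1 + \<kappa> i * (Y (tt i) \<omega>*(1-Y (tt i) \<omega>))) \<partial>M)
          - \<kappa> i * EO i - (\<theta> (Suc i))^3/6 * ED i \<le> u (Suc i)"
      unfolding \<kappa>_def EO_def ED_def u_def
      by (rule step[OF t0 tle]) (use th0 thle t0 tle in \<open>auto intro!: osc_upper osc_nonneg osc_le1\<close>)
    have PW: "exp (-\<theta> i * Y (tt i) \<omega>) - \<eta> i * exp (-\<theta> i * a) * Y (tt i) \<omega>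
          \<le> exp (-\<theta> (Suc i)*Y (tt i) \<omega>) * (1 + \<kappa> i * (Y (tt i) \<omega>*(1-Y (tt i) \<omega>)))" if w: "\<omega> \<in> space M" for \<omega>
      using pathwise_shift[of "Y (tt i) \<omega>" "\<theta> i" "\<eta> i" a "\<kappa> i"] Ybd[OF w t0] th0 e0 a k0 cond
      unfolding \<eta>_def by simp
    have iE: "integrable M (\<lambda>\<omega>. exp (-\<theta> i * Y (tt i) \<omega>))" using expY_int[OF t0, of "\<theta> i"] th0 by simp
    have iY: "integrable M (Y (tt i))" by (rule YI[OF t0])
    have i1: "integrable M (\<lambda>\<omega>. exp (-\<theta> i * Y (tt i) \<omega>) - \<eta> i * exp (-\<theta> i * a) * Y (tt i) \<omega>)"
      using iE iY by simp
    have I1: "(\<integral>\<omega>. exp (-\<theta> i * Y (tt i) \<omega>) - \<eta> i * exp (-\<theta> i * a) * Y (tt i) \<omega> \<partial>M)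
        = u i - \<eta> i * exp (-\<theta> i * a) * y0"
      unfolding u_def using iE iY EY[OF t0] by simp
    have iYY: "integrable M (\<lambda>\<omega>. Y (tt i) \<omega> * Y (tt i) \<omega>)"
      by (rule integrable_bdd_mult[OF iY YM[OF t0], of 1]) (use Yabs t0 in auto)
    have iP: "integrable M (\<lambda>\<omega>. 1 + \<kappa> i * (Y (tt i) \<omega> * (1 - Y (tt i) \<omega>)))"
      using iY iYY by (simp add: algebra_simps)
    have i2: "integrable M (\<lambda>\<omega>. exp (-\<theta> (Suc i)*Y (tt i) \<omega>) * (1 + \<kappa> i * (Y (tt i) \<omega>*(1-Y (tt i) \<omega>))))"
    proof (rule integrable_bdd_mult[OF iP _, of _ 1])
      show "(\<lambda>\<omega>. exp (-\<theta> (Suc i)*Y (tt i) \<omega>)) \<in> borel_measurable M" using YM[OF t0] by measurable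
      fix \<omega> assume w: "\<omega> \<in> space M"
      have "0 \<le> \<theta> (Suc i) * Y (tt i) \<omega>" using Ybd[OF w t0] th0 thle by simp
      then show "\<bar>exp (-\<theta> (Suc i)*Y (tt i) \<omega>)\<bar> \<le> 1" by simp
    qed
    have "(\<integral>\<omega>. exp (-\<theta> i * Y (tt i) \<omega>) - \<eta> i * exp (-\<theta> i * a) * Y (tt i) \<omega> \<partial>M)
        \<le> (\<integral>\<omega>. exp (-\<theta> (Suc i)*Y (tt i) \<omega>) * (1 + \<kappa> i * (Y (tt i) \<omega>*(1-Y (tt i) \<omega>))) \<partial>M)"
      by (rule integral_mono[OF i1 i2 PW])
    then show ?thesis using I1 ST by linarith
  qed
  have sumtel: "u 0 - (\<Sum>i<n. \<eta> i * exp (-\<theta> i * a) * y0 + \<kappa> i * EO i + (\<theta> (Suc i))^3/6 * ED i) \<le> u n"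
    by (rule telescope_ineq) (rule step_i)
  have un: "u n = (\<integral>\<omega>. exp (-lm * Y \<tau> \<omega>) \<partial>M)" unfolding u_def using TF[OF n] unfolding \<theta>c tt_def by simp
  have u0: "u 0 = exp (-\<theta> 0 * y0)"
  proof -
    have "u 0 = (\<integral>\<omega>. exp (-\<theta> 0 * y0) \<partial>M)" unfolding u_def
      using TF[OF n] unfolding tt_def[symmetric] by (intro Bochner_Integration.integral_cong) (auto simp: Y0)
    then show ?thesis by (simp add: prob_space)
  qed
  have B1: "(\<Sum>i<n. \<eta> i * exp (-\<theta> i * a)) \<le> 3/a * exp (-a * \<theta> 0)"
  proof -
    have "(\<Sum>i<n. \<eta> i * exp (-\<theta> i * a)) \<le> (\<Sum>i<n. 3/a * (exp (-a*\<theta> i) - exp (-a*\<theta> (Suc i))))"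
    proof (rule sum_mono)
      fix i assume "i \<in> {..<n}"
      hence i: "i < n" by simp
      have thle: "\<theta> i \<le> \<theta> (Suc i)" using TF[OF i] unfolding \<theta>c tt_def by auto
      have eq: "\<theta> (Suc i) - \<theta> i = c * (\<tau>/n) * \<theta> i * \<theta> (Suc i)" using TF[OF i] unfolding \<theta>c tt_def by auto
      have th0: "0 < \<theta> i" and thl: "\<theta> (Suc i) \<le> lm" using TF[OF i] unfolding \<theta>c tt_def by auto
      have p: "\<theta> i * \<theta> (Suc i) \<le> lm * lm" using thle thl th0 by (intro mult_mono) auto
      have q: "0 \<le> c*(\<tau>/n)" using c0 \<tau> by simp
      have "c*(\<tau>/n)*(\<theta> i * \<theta> (Suc i)) \<le> c*(\<tau>/n)*(lm * lm)" using mult_left_mono[OF p q] .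
      hence "\<eta> i \<le> c * (\<tau>/n) * lm * lm" unfolding \<eta>_def eq by (simp add: mult.assoc)
      also have "\<dots> \<le> 1" using small unfolding c_def by (simp add: power2_eq_square mult.assoc)
      finally have e1: "\<eta> i \<le> 1" .
      have e0: "0 \<le> \<eta> i" unfolding \<eta>_def using thle by simp
      have "a * \<eta> i \<le> 1 * 1" using a e0 e1 by (intro mult_mono) auto
      hence "\<eta> i * exp (-a*\<theta> i) \<le> 3/a * (exp (-a*\<theta> i) - exp (-a*(\<theta> i + \<eta> i)))"
        using telescope_bound[OF e0 a(1)] by simp
      then show "\<eta> i * exp (-\<theta> i * a) \<le> 3/a * (exp (-a*\<theta> i) - exp (-a*\<theta> (Suc i)))"
        unfolding \<eta>_def by (simp add: mult.commute)
    qed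
    also have "\<dots> = 3/a * (\<Sum>i<n. exp (-a*\<theta> i) - exp (-a*\<theta> (Suc i)))"
      by (simp only: sum_distrib_left)
    also have "\<dots> = 3/a * (exp (-a*\<theta> 0) - exp (-a*\<theta> n))"
      by (simp only: sum_lessThan_telescope'[where f="\<lambda>i. exp (-a*\<theta> i)"])
    also have "\<dots> \<le> 3/a * exp (-a * \<theta> 0)" using a by (intro mult_left_mono) auto
    finally show ?thesis .
  qed
  have EO0: "0 \<le> EO i" if i: "i < n" for i
  proof -
    have t0: "0 \<le> tt i" and ts: "tt (Suc i) - tt i = \<tau>/n" using TF[OF i] unfolding \<theta>c tt_def by auto
    have "0 \<le> \<tau>/n" using \<tau> by simp
    hence tle: "tt i \<le> tt (Suc i)" using ts by linarith
    show ?thesis unfolding EO_def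
      by (intro integral_nonneg_AE AE_I2) (auto intro!: osc_nonneg t0 tle)
  qed
  have B2: "(\<Sum>i<n. \<kappa> i * EO i) \<le> g*lm^2/2*(\<tau>/n) * (\<Sum>i<n. EO i)"
    unfolding sum_distrib_left
  proof (rule sum_mono)
    fix i assume "i \<in> {..<n}"
    hence i: "i < n" by simp
    have th: "0 < \<theta> (Suc i)" "\<theta> (Suc i) \<le> lm" and ts: "tt (Suc i) - tt i = \<tau>/n"
      using TF[OF i] unfolding \<theta>c tt_def by auto
    have "(\<theta> (Suc i))^2 \<le> lm^2" using th by (intro power_mono) auto
    hence "g * (\<theta> (Suc i))^2 * (\<tau>/n) / 2 \<le> g * lm^2 * (\<tau>/n) / 2" using gpos \<tau>
      by (intro divide_right_mono mult_right_mono mult_left_mono) auto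
    hence "\<kappa> i \<le> g*lm^2/2*(\<tau>/n)" unfolding \<kappa>_def ts by simp
    then show "\<kappa> i * EO i \<le> g*lm^2/2*(\<tau>/n) * EO i" using EO0[OF i] by (rule mult_right_mono)
  qed
  have ED0: "0 \<le> ED i" for i unfolding ED_def by (intro integral_nonneg_AE AE_I2) auto
  have B3: "(\<Sum>i<n. (\<theta> (Suc i))^3/6 * ED i) \<le> lm^3/6 * (\<Sum>i<n. ED i)"
    unfolding sum_distrib_left
  proof (rule sum_mono)
    fix i assume "i \<in> {..<n}"
    hence i: "i < n" by simp
    have th: "0 < \<theta> (Suc i)" "\<theta> (Suc i) \<le> lm" using TF[OF i] unfolding \<theta>c tt_def by auto
    have "(\<theta> (Suc i))^3 \<le> lm^3" using th by (intro power_mono) auto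
    hence "(\<theta> (Suc i))^3/6 \<le> lm^3/6" by simp
    then show "(\<theta> (Suc i))^3/6 * ED i \<le> lm^3/6 * ED i" using ED0 by (rule mult_right_mono)
  qed
  have "(\<Sum>i<n. \<eta> i * exp (-\<theta> i * a) * y0 + \<kappa> i * EO i + (\<theta> (Suc i))^3/6 * ED i)
      = y0 * (\<Sum>i<n. \<eta> i * exp (-\<theta> i * a)) + (\<Sum>i<n. \<kappa> i * EO i) + (\<Sum>i<n. (\<theta> (Suc i))^3/6 * ED i)"
    by (simp add: sum.distrib sum_distrib_left mult.commute)
  moreover have "y0 * (\<Sum>i<n. \<eta> i * exp (-\<theta> i * a)) \<le> y0 * (3/a * exp (-a * \<theta> 0))"
    using B1 y0 by (intro mult_left_mono) auto
  ultimately show ?thesis using sumtel un u0 B2 B3 unfolding EO_def ED_def by simp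
qed

end

lemma sumsq_identity:
  fixes x :: "nat \<Rightarrow> real"
  shows "(\<Sum>i<n. x i)^2 = (\<Sum>i<n. x i * (x i + 2 * (\<Sum>j\<in>{Suc i..<n}. x j)))"
proof (induction n)
  case 0 then show ?case by simp
next
  case (Suc n)
  have split: "(\<Sum>j\<in>{Suc i..<Suc n}. x j) = (\<Sum>j\<in>{Suc i..<n}. x j) + x n" if "i < n" for i
    using that by (simp add: sum.atLeastLessThan_Suc)
  have "(\<Sum>i<Suc n. x i * (x i + 2 * (\<Sum>j\<in>{Suc i..<Suc n}. x j)))
      = (\<Sum>i<n. x i * (x i + 2 * (\<Sum>j\<in>{Suc i..<n}. x j)) + 2 * x i * x n) + x n * x n"
    by (simp add: split algebra_simps)
  also have "\<dots> = (\<Sum>i<n. x i)^2 + 2 * (\<Sum>i<n. x i) * x n + x n * x n"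
  proof -
    have "(\<Sum>i<n. 2 * x i * x n) = 2 * (\<Sum>i<n. x i) * x n"
      by (simp add: sum_distrib_left sum_distrib_right mult.assoc)
    then show ?thesis using Suc by (simp add: sum.distrib)
  qed
  also have "\<dots> = (\<Sum>i<Suc n. x i)^2" by (simp add: power2_eq_square algebra_simps)
  finally show ?case by simp
qed

context M1 begin

lemma sq_incr:
  assumes st: "0 \<le> s" "s \<le> t" and hF: "h \<in> borel_measurable (F s)" and hb: "\<And>x. x \<in> space M \<Longrightarrow> \<bar>h x\<bar> \<le> B"
  shows "(\<integral>\<omega>. h \<omega> * (Y t \<omega> - Y s \<omega>)^2 \<partial>M) = (\<integral>\<omega>. h \<omega> * (Y t \<omega> * Y t \<omega>) \<partial>M) - (\<integral>\<omega>. h \<omega> * (Y s \<omega> * Y s \<omega>) \<partial>M)"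
proof -
  have t0: "0 \<le> t" using st by linarith
  have hM[measurable]: "h \<in> borel_measurable M" using measurable_from_subalg[OF subF hF] .
  have Ym[measurable]: "Y s \<in> borel_measurable M" "Y t \<in> borel_measurable M" using st t0 by (auto intro: YM)
  have hYF: "(\<lambda>\<omega>. h \<omega> * Y s \<omega>) \<in> borel_measurable (F s)" using hF YF[OF st(1)] by measurable
  have hYb: "\<bar>h x * Y s x\<bar> \<le> \<bar>B\<bar>" if "x \<in> space M" for x
  proof -
    have "\<bar>h x\<bar> * \<bar>Y s x\<bar> \<le> \<bar>B\<bar> * 1" using hb[OF that] Yabs[OF that st(1)]
      by (intro mult_mono) auto
    then show ?thesis by (simp add: abs_mult)
  qed
  have E2: "(\<integral>\<omega>. (h \<omega> * Y s \<omega>) * Y t \<omega> \<partial>M) = (\<integral>\<omega>. (h \<omega> * Y s \<omega>) * Y s \<omega> \<partial>M)"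
    by (rule mart_mult[OF prob filt mY st hYF hYb])
  have i1: "integrable M (\<lambda>\<omega>. (h \<omega> * Y s \<omega>) * Y t \<omega>)" "integrable M (\<lambda>\<omega>. (h \<omega> * Y s \<omega>) * Y s \<omega>)"
    using integrable_bdd_mult[OF YI[OF t0], of "\<lambda>\<omega>. h \<omega> * Y s \<omega>" "\<bar>B\<bar>"]
      integrable_bdd_mult[OF YI[OF st(1)], of "\<lambda>\<omega>. h \<omega> * Y s \<omega>" "\<bar>B\<bar>"] hYb by auto
  have iYY: "integrable M (\<lambda>\<omega>. Y r \<omega> * Y r \<omega>)" if "0 \<le> r" for r
    by (rule integrable_bdd_mult[OF YI[OF that] YM[OF that], of 1]) (use Yabs that in auto)
  have i2: "integrable M (\<lambda>\<omega>. h \<omega> * (Y t \<omega> * Y t \<omega>))" "integrable M (\<lambda>\<omega>. h \<omega> * (Y s \<omega> * Y s \<omega>))"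
    using integrable_bdd_mult[OF iYY[OF t0] hM hb] integrable_bdd_mult[OF iYY[OF st(1)] hM hb] by auto
  have eq: "h \<omega> * (Y t \<omega> - Y s \<omega>)^2 = h \<omega> * (Y t \<omega> * Y t \<omega>) - h \<omega> * (Y s \<omega> * Y s \<omega>)
      - 2 * ((h \<omega> * Y s \<omega>) * Y t \<omega> - (h \<omega> * Y s \<omega>) * Y s \<omega>)" for \<omega>
    by (simp add: power2_eq_square algebra_simps)
  show ?thesis unfolding eq using i1 i2 E2 by (simp add: mult.assoc)
qed

end

context M1 begin

lemma YY_bnd: "\<omega> \<in> space M \<Longrightarrow> 0 \<le> t \<Longrightarrow> 0 \<le> Y t \<omega> * Y t \<omega> \<and> Y t \<omega> * Y t \<omega> \<le> 1"
  using Ybd[of \<omega> t] by (auto intro: mult_le_one)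

lemma iYYl: "0 \<le> t \<Longrightarrow> integrable M (\<lambda>\<omega>. Y t \<omega> * Y t \<omega>)"
  by (rule bint[where B=1]) (use YM YY_bnd in auto)

lemma EYY: "0 \<le> t \<Longrightarrow> 0 \<le> (\<integral>\<omega>. Y t \<omega> * Y t \<omega> \<partial>M) \<and> (\<integral>\<omega>. Y t \<omega> * Y t \<omega> \<partial>M) \<le> 1"
proof -
  assume t: "0 \<le> t"
  have i: "integrable M (\<lambda>\<omega>. Y t \<omega> * Y t \<omega>)"
    by (rule bint[where B=1]) (use YM[OF t] YY_bnd[OF _ t] in auto)
  have "0 \<le> (\<integral>\<omega>. Y t \<omega> * Y t \<omega> \<partial>M)" by (intro integral_nonneg_AE AE_I2) (use YY_bnd[OF _ t] in auto)
  moreover have "(\<integral>\<omega>. Y t \<omega> * Y t \<omega> \<partial>M) \<le> (\<integral>\<omega>. 1 \<partial>M)"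
    by (rule integral_mono[OF i]) (use YY_bnd[OF _ t] in auto)
  ultimately show ?thesis by (simp add: prob_space)
qed

lemma S2_bound:
  fixes tt :: "nat \<Rightarrow> real" and n :: nat
  assumes tt0: "\<And>i. 0 \<le> tt i" and ttm: "\<And>i. tt i \<le> tt (Suc i)"
  shows "(\<integral>\<omega>. (\<Sum>i<n. (Y (tt (Suc i)) \<omega> - Y (tt i) \<omega>)^2)^2 \<partial>M) \<le> 3"
proof -
  define D where "D i \<omega> = Y (tt (Suc i)) \<omega> - Y (tt i) \<omega>" for i \<omega>
  have ttmono: "tt i \<le> tt j" if "i \<le> j" for i j by (rule lift_Suc_mono_le[of tt, OF ttm that])
  have Ym[measurable]: "Y (tt i) \<in> borel_measurable M" for i using YM[OF tt0] .
  have Dm[measurable]: "D i \<in> borel_measurable M" for i unfolding D_def by measurable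
  have DF: "(\<lambda>\<omega>. (D i \<omega>)^2) \<in> borel_measurable (F (tt j))" if "Suc i \<le> j" for i j
  proof -
    have "(\<lambda>\<omega>. (D i \<omega>)^2) \<in> borel_measurable (F (tt (Suc i)))" unfolding D_def
      using YF[OF tt0[of "Suc i"]] meas_mono[OF tt0[of i] ttm[of i] YF[OF tt0[of i]]] by measurable
    then show ?thesis by (rule meas_mono[OF tt0 ttmono[OF that]])
  qed
  have Db: "\<bar>D i \<omega>\<bar> \<le> 1" if "\<omega> \<in> space M" for i \<omega>
    unfolding D_def using Ydiff[OF that tt0 tt0] .
  have D2b: "0 \<le> (D i \<omega>)^2 \<and> (D i \<omega>)^2 \<le> 1" if "\<omega> \<in> space M" for i \<omega>
    using Db[OF that, of i] by (simp add: abs_square_le_1)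
  have iD2: "integrable M (\<lambda>\<omega>. (D i \<omega>)^2)" for i
    by (rule bint[where B=1]) (use D2b in auto)
  have ED2: "(\<integral>\<omega>. (D i \<omega>)^2 \<partial>M) = (\<integral>\<omega>. Y (tt (Suc i)) \<omega> * Y (tt (Suc i)) \<omega> \<partial>M) - (\<integral>\<omega>. Y (tt i) \<omega> * Y (tt i) \<omega> \<partial>M)" for i
    using sq_incr[OF tt0[of i] ttm[of i], where h="\<lambda>_. 1" and B=1] unfolding D_def by simp
  have cross: "(\<integral>\<omega>. (D i \<omega>)^2 * (\<Sum>j\<in>{Suc i..<n}. (D j \<omega>)^2) \<partial>M) \<le> (\<integral>\<omega>. (D i \<omega>)^2 \<partial>M)" if i: "i < n" for i
  proof -
    define f where "f j = (\<integral>\<omega>. (D i \<omega>)^2 * (Y (tt j) \<omega> * Y (tt j) \<omega>) \<partial>M)" for j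
    have iprod: "integrable M (\<lambda>\<omega>. (D i \<omega>)^2 * (D j \<omega>)^2)" for j
      by (rule integrable_bdd_mult[OF iD2 _, of _ 1]) (use D2b in auto)
    have "(\<integral>\<omega>. (D i \<omega>)^2 * (\<Sum>j\<in>{Suc i..<n}. (D j \<omega>)^2) \<partial>M) = (\<Sum>j\<in>{Suc i..<n}. \<integral>\<omega>. (D i \<omega>)^2 * (D j \<omega>)^2 \<partial>M)"
      by (simp add: sum_distrib_left iprod)
    also have "\<dots> = (\<Sum>j\<in>{Suc i..<n}. f (Suc j) - f j)"
    proof (rule sum.cong[OF refl])
      fix j assume "j \<in> {Suc i..<n}"
      hence j: "Suc i \<le> j" by simp
      show "(\<integral>\<omega>. (D i \<omega>)^2 * (D j \<omega>)^2 \<partial>M) = f (Suc j) - f j"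
        unfolding f_def using sq_incr[OF tt0[of j] ttm[of j] DF[OF j], where B=1] D2b unfolding D_def by auto
    qed
    also have "\<dots> = f n - f (Suc i)" using i by (simp add: sum_Suc_diff')
    also have "\<dots> = (\<integral>\<omega>. (D i \<omega>)^2 * (Y (tt n) \<omega> * Y (tt n) \<omega> - Y (tt (Suc i)) \<omega> * Y (tt (Suc i)) \<omega>) \<partial>M)"
    proof -
      have "integrable M (\<lambda>\<omega>. (D i \<omega>)^2 * (Y (tt j) \<omega> * Y (tt j) \<omega>))" for j
        by (rule integrable_bdd_mult[OF iYYl[OF tt0] _, of _ 1]) (use D2b in auto)
      then show ?thesis unfolding f_def by (simp add: right_diff_distrib)
    qed
    also have "\<dots> \<le> (\<integral>\<omega>. (D i \<omega>)^2 \<partial>M)"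
    proof (rule integral_mono)
      show "integrable M (\<lambda>\<omega>. (D i \<omega>)^2 * (Y (tt n) \<omega> * Y (tt n) \<omega> - Y (tt (Suc i)) \<omega> * Y (tt (Suc i)) \<omega>))"
        by (rule integrable_bdd_mult[OF Bochner_Integration.integrable_diff[OF iYYl[OF tt0] iYYl[OF tt0]] _, of _ 1]) (use D2b in auto)
      show "integrable M (\<lambda>\<omega>. (D i \<omega>)^2)" by (rule iD2)
      fix \<omega> assume w: "\<omega> \<in> space M"
      have "Y (tt n) \<omega> * Y (tt n) \<omega> - Y (tt (Suc i)) \<omega> * Y (tt (Suc i)) \<omega> \<le> 1" using YY_bnd[OF w tt0[of n]] YY_bnd[OF w tt0[of "Suc i"]] by linarith
      then show "(D i \<omega>)^2 * (Y (tt n) \<omega> * Y (tt n) \<omega> - Y (tt (Suc i)) \<omega> * Y (tt (Suc i)) \<omega>) \<le> (D i \<omega>)^2"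
        using D2b[OF w, of i] by (simp add: mult_left_le)
    qed
    finally show ?thesis .
  qed
  have D4: "(\<integral>\<omega>. (D i \<omega>)^2 * (D i \<omega>)^2 \<partial>M) \<le> (\<integral>\<omega>. (D i \<omega>)^2 \<partial>M)" for i
  proof (rule integral_mono)
    show "integrable M (\<lambda>\<omega>. (D i \<omega>)^2 * (D i \<omega>)^2)"
      by (rule integrable_bdd_mult[OF iD2 _, of _ 1]) (use D2b in auto)
    show "integrable M (\<lambda>\<omega>. (D i \<omega>)^2)" by (rule iD2)
    fix \<omega> assume w: "\<omega> \<in> space M"
    show "(D i \<omega>)^2 * (D i \<omega>)^2 \<le> (D i \<omega>)^2" using D2b[OF w, of i] by (intro mult_left_le) auto
  qed
  have icr: "integrable M (\<lambda>\<omega>. (D i \<omega>)^2 * (\<Sum>j\<in>{Suc i..<n}. (D j \<omega>)^2))" for i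
    unfolding sum_distrib_left
    by (intro Bochner_Integration.integrable_sum integrable_bdd_mult[OF iD2 _, of _ 1]) (use D2b in auto)
  have i4: "integrable M (\<lambda>\<omega>. (D i \<omega>)^2 * (D i \<omega>)^2)" for i
    by (rule integrable_bdd_mult[OF iD2 _, of _ 1]) (use D2b in auto)
  have "(\<integral>\<omega>. (\<Sum>i<n. (D i \<omega>)^2)^2 \<partial>M)
      = (\<integral>\<omega>. (\<Sum>i<n. (D i \<omega>)^2 * (D i \<omega>)^2 + 2 * ((D i \<omega>)^2 * (\<Sum>j\<in>{Suc i..<n}. (D j \<omega>)^2))) \<partial>M)"
    by (simp add: sumsq_identity algebra_simps)
  also have "\<dots> = (\<Sum>i<n. (\<integral>\<omega>. (D i \<omega>)^2 * (D i \<omega>)^2 \<partial>M) + 2 * (\<integral>\<omega>. (D i \<omega>)^2 * (\<Sum>j\<in>{Suc i..<n}. (D j \<omega>)^2) \<partial>M))"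
    using icr i4 by (simp add: Bochner_Integration.integral_sum)
  also have "\<dots> \<le> (\<Sum>i<n. 3 * (\<integral>\<omega>. (D i \<omega>)^2 \<partial>M))"
  proof (rule sum_mono)
    fix i assume "i \<in> {..<n}"
    hence i: "i < n" by simp
    show "(\<integral>\<omega>. (D i \<omega>)^2 * (D i \<omega>)^2 \<partial>M) + 2 * (\<integral>\<omega>. (D i \<omega>)^2 * (\<Sum>j\<in>{Suc i..<n}. (D j \<omega>)^2) \<partial>M)
        \<le> 3 * (\<integral>\<omega>. (D i \<omega>)^2 \<partial>M)" using D4[of i] cross[OF i] by linarith
  qed
  also have "\<dots> = 3 * ((\<integral>\<omega>. Y (tt n) \<omega> * Y (tt n) \<omega> \<partial>M) - (\<integral>\<omega>. Y (tt 0) \<omega> * Y (tt 0) \<omega> \<partial>M))"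
    unfolding ED2 sum_distrib_left[symmetric]
    by (simp only: sum_lessThan_telescope[where f="\<lambda>i. (\<integral>\<omega>. Y (tt i) \<omega> * Y (tt i) \<omega> \<partial>M)"])
  also have "\<dots> \<le> 3" unfolding right_diff_distrib using EYY[OF tt0[of n]] EYY[OF tt0[of 0]] by linarith
  finally show ?thesis unfolding D_def .
qed

end

lemma quad_trick: "0 < K \<Longrightarrow> 0 \<le> m \<Longrightarrow> m \<le> 1 \<Longrightarrow> m * S \<le> S^2 / K + K * m / 4" for K m S :: real
proof -
  assume K: "0 < K" and m: "0 \<le> m" "m \<le> 1"
  have "0 \<le> (S - K/2)^2 / K" using K by simp
  hence s: "S \<le> S^2/K + K/4" using K by (simp add: power2_eq_square field_simps)
  have "m * S \<le> m * (S^2/K + K/4)" using s m(1) by (rule mult_left_mono)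
  also have "\<dots> = m * (S^2/K) + K*m/4" by (simp add: algebra_simps)
  also have "m * (S^2/K) \<le> S^2/K" using m K by (intro mult_left_le_one_le) auto
  finally show ?thesis by simp
qed

context M1 begin

lemma cubic_bound:
  fixes tt :: "nat \<Rightarrow> real" and n :: nat and m :: "'a \<Rightarrow> real" and K :: real
  assumes tt0: "\<And>i. 0 \<le> tt i" and ttm: "\<And>i. tt i \<le> tt (Suc i)"
    and mm[measurable]: "m \<in> borel_measurable M" and mb: "\<And>\<omega>. \<omega> \<in> space M \<Longrightarrow> 0 \<le> m \<omega> \<and> m \<omega> \<le> 1"
    and Dm: "\<And>\<omega> i. \<omega> \<in> space M \<Longrightarrow> i < n \<Longrightarrow> \<bar>Y (tt (Suc i)) \<omega> - Y (tt i) \<omega>\<bar> \<le> m \<omega>"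
    and K: "0 < K"
  shows "(\<Sum>i<n. \<integral>\<omega>. \<bar>Y (tt (Suc i)) \<omega> - Y (tt i) \<omega>\<bar>^3 \<partial>M) \<le> 3/K + K/4 * (\<integral>\<omega>. m \<omega> \<partial>M)"
proof -
  define D where "D i \<omega> = Y (tt (Suc i)) \<omega> - Y (tt i) \<omega>" for i \<omega>
  define S where "S \<omega> = (\<Sum>i<n. (D i \<omega>)^2)" for \<omega>
  have Ym[measurable]: "Y (tt i) \<in> borel_measurable M" for i using YM[OF tt0] .
  have Dmeas[measurable]: "D i \<in> borel_measurable M" for i unfolding D_def by measurable
  have Sm[measurable]: "S \<in> borel_measurable M" unfolding S_def by measurable
  have Db: "\<bar>D i \<omega>\<bar> \<le> 1" if "\<omega> \<in> space M" for i \<omega> unfolding D_def using Ydiff[OF that tt0 tt0] .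
  have iD3: "integrable M (\<lambda>\<omega>. \<bar>D i \<omega>\<bar>^3)" for i
  proof (rule bint[where B=1])
    fix \<omega> assume w: "\<omega> \<in> space M"
    show "\<bar>\<bar>D i \<omega>\<bar>^3\<bar> \<le> 1" using Db[OF w, of i] by (simp add: power_le_one)
  qed measurable
  have iS2: "integrable M (\<lambda>\<omega>. (S \<omega>)^2)"
  proof (rule bint[where B="(real n)^2"])
    fix \<omega> assume w: "\<omega> \<in> space M"
    have "S \<omega> \<le> (\<Sum>i<n. 1)" unfolding S_def using Db[OF w] by (intro sum_mono) (simp add: abs_square_le_1)
    moreover have "0 \<le> S \<omega>" unfolding S_def by (intro sum_nonneg) simp
    ultimately show "\<bar>(S \<omega>)^2\<bar> \<le> (real n)^2" by (simp add: power_mono)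
  qed measurable
  have im: "integrable M m" by (rule bint[where B=1]) (use mb in auto)
  have pw: "(\<Sum>i<n. \<bar>D i \<omega>\<bar>^3) \<le> (S \<omega>)^2 / K + K * m \<omega> / 4" if w: "\<omega> \<in> space M" for \<omega>
  proof -
    have "(\<Sum>i<n. \<bar>D i \<omega>\<bar>^3) \<le> (\<Sum>i<n. m \<omega> * (D i \<omega>)^2)"
    proof (rule sum_mono)
      fix i assume "i \<in> {..<n}"
      hence "\<bar>D i \<omega>\<bar> \<le> m \<omega>" unfolding D_def using Dm[OF w] by simp
      hence "\<bar>D i \<omega>\<bar> * \<bar>D i \<omega>\<bar>^2 \<le> m \<omega> * \<bar>D i \<omega>\<bar>^2" by (rule mult_right_mono) simp
      then show "\<bar>D i \<omega>\<bar>^3 \<le> m \<omega> * (D i \<omega>)^2" by (simp add: power3_eq_cube power2_eq_square)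
    qed
    also have "\<dots> = m \<omega> * S \<omega>" unfolding S_def by (simp add: sum_distrib_left)
    also have "\<dots> \<le> (S \<omega>)^2 / K + K * m \<omega> / 4" using quad_trick[OF K] mb[OF w] by auto
    finally show ?thesis .
  qed
  have "(\<Sum>i<n. \<integral>\<omega>. \<bar>D i \<omega>\<bar>^3 \<partial>M) = (\<integral>\<omega>. (\<Sum>i<n. \<bar>D i \<omega>\<bar>^3) \<partial>M)"
    by (simp add: Bochner_Integration.integral_sum iD3)
  also have "\<dots> \<le> (\<integral>\<omega>. (S \<omega>)^2 / K + K * m \<omega> / 4 \<partial>M)"
    by (rule integral_mono) (use iD3 iS2 im pw in auto)
  also have "\<dots> = (\<integral>\<omega>. (S \<omega>)^2 \<partial>M) / K + K/4 * (\<integral>\<omega>. m \<omega> \<partial>M)"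
    using iS2 im by simp
  also have "(\<integral>\<omega>. (S \<omega>)^2 \<partial>M) \<le> 3" unfolding S_def D_def by (rule S2_bound[of tt, OF tt0 ttm])
  finally show ?thesis unfolding D_def using K by (simp add: divide_right_mono)
qed

end

lemma ttg_facts:
  assumes "0 \<le> \<tau>"
  shows "0 \<le> ttg \<tau> n i" "ttg \<tau> n i \<le> ttg \<tau> n (Suc i)" "i < n \<Longrightarrow> ttg \<tau> n (Suc i) \<le> \<tau>"
    "ttg \<tau> n (Suc i) - ttg \<tau> n i = \<tau> / n"
proof -
  show "0 \<le> ttg \<tau> n i" unfolding ttg_def using assms by simp
  show e: "ttg \<tau> n (Suc i) - ttg \<tau> n i = \<tau> / n" unfolding ttg_def by (simp add: diff_divide_distrib[symmetric] algebra_simps)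
  have "0 \<le> \<tau>/n" using assms by simp
  then show "ttg \<tau> n i \<le> ttg \<tau> n (Suc i)" using e by linarith
  assume i: "i < n"
  have "real (Suc i) * \<tau> \<le> real n * \<tau>" using i assms by (intro mult_right_mono) auto
  then show "ttg \<tau> n (Suc i) \<le> \<tau>" unfolding ttg_def using i by (simp add: field_simps)
qed

context M1 begin

definition mmax :: "real \<Rightarrow> nat \<Rightarrow> 'a \<Rightarrow> real" where
  "mmax \<tau> n \<omega> = Max ((\<lambda>i. oscf (ttg \<tau> n i) (ttg \<tau> n (Suc i)) \<omega>) ` {..<n})"

lemma mmax_props:
  assumes \<tau>: "0 < \<tau>" and n: "0 < n"
  shows "mmax \<tau> n \<in> borel_measurable M"
    "\<And>\<omega>. \<omega> \<in> space M \<Longrightarrow> 0 \<le> mmax \<tau> n \<omega> \<and> mmax \<tau> n \<omega> \<le> 1"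
    "\<And>\<omega> i. \<omega> \<in> space M \<Longrightarrow> i < n \<Longrightarrow> oscf (ttg \<tau> n i) (ttg \<tau> n (Suc i)) \<omega> \<le> mmax \<tau> n \<omega>"
    "\<And>\<omega> i. \<omega> \<in> space M \<Longrightarrow> i < n \<Longrightarrow> \<bar>Y (ttg \<tau> n (Suc i)) \<omega> - Y (ttg \<tau> n i) \<omega>\<bar> \<le> mmax \<tau> n \<omega>"
proof -
  note tf = ttg_facts[OF less_imp_le[OF \<tau>], of n]
  have ne: "{..<n} \<noteq> {}" using n by auto
  show "mmax \<tau> n \<in> borel_measurable M" unfolding mmax_def
    by (rule borel_measurable_Max) (auto intro!: osc_meas tf)
  show up: "oscf (ttg \<tau> n i) (ttg \<tau> n (Suc i)) \<omega> \<le> mmax \<tau> n \<omega>" if "\<omega> \<in> space M" "i < n" for \<omega> i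
    unfolding mmax_def using that by (intro Max_ge) auto
  show "0 \<le> mmax \<tau> n \<omega> \<and> mmax \<tau> n \<omega> \<le> 1" if w: "\<omega> \<in> space M" for \<omega>
  proof
    show "0 \<le> mmax \<tau> n \<omega>" using up[OF w n] osc_nonneg[OF w tf(1)[of 0] tf(2)[of 0]] by linarith
    show "mmax \<tau> n \<omega> \<le> 1" unfolding mmax_def using ne
      by (subst Max_le_iff) (auto intro!: osc_le1[OF w tf(1) tf(2)])
  qed
  show "\<bar>Y (ttg \<tau> n (Suc i)) \<omega> - Y (ttg \<tau> n i) \<omega>\<bar> \<le> mmax \<tau> n \<omega>" if "\<omega> \<in> space M" "i < n" for \<omega> i
  proof -
    have "\<bar>Y (ttg \<tau> n (Suc i)) \<omega> - Y (ttg \<tau> n i) \<omega>\<bar> \<le> oscf (ttg \<tau> n i) (ttg \<tau> n (Suc i)) \<omega>"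
      by (rule osc_upper[OF that(1) tf(1)[of i] tf(2)[of i]]) (use tf(2)[of i] in auto)
    then show ?thesis using up[OF that] by linarith
  qed
qed

lemma mmax_lim:
  assumes \<tau>: "0 < \<tau>"
  shows "(\<lambda>n. \<integral>\<omega>. mmax \<tau> n \<omega> \<partial>M) \<longlonglongrightarrow> 0"
proof -
  note tf = ttg_facts[OF less_imp_le[OF \<tau>]]
  have pt: "(\<lambda>j. mmax \<tau> (Suc j) \<omega>) \<longlonglongrightarrow> 0" if w: "\<omega> \<in> space M" for \<omega>
  proof (rule LIMSEQ_I)
    fix e :: real assume e: "0 < e"
    have "continuous_on {0..\<tau>} (\<lambda>t. Y t \<omega>)" using Ycont[OF w] by (rule continuous_on_subset) auto
    hence "uniformly_continuous_on {0..\<tau>} (\<lambda>t. Y t \<omega>)" by (rule compact_uniformly_continuous) simp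
    moreover have "0 < e/2" using e by simp
    ultimately obtain d where d: "d > 0" and dd: "\<And>x x'. x \<in> {0..\<tau>} \<Longrightarrow> x' \<in> {0..\<tau>} \<Longrightarrow> dist x' x < d \<Longrightarrow> dist (Y x' \<omega>) (Y x \<omega>) < e/2"
      by (rule uniformly_continuous_onE) metis
    obtain N :: nat where N: "\<tau> / d < N" using reals_Archimedean2 by blast
    show "\<exists>N. \<forall>j\<ge>N. norm (mmax \<tau> (Suc j) \<omega> - 0) < e"
    proof (intro exI allI impI)
      fix j assume j: "N \<le> j"
      have "\<tau> / d < real (Suc j)" using N j by simp
      hence step: "\<tau> / real (Suc j) < d" using d \<tau> by (simp add: field_simps)
      have "oscf (ttg \<tau> (Suc j) i) (ttg \<tau> (Suc j) (Suc i)) \<omega> \<le> e/2" if i: "i < Suc j" for i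
      proof (rule osc_least[OF w tf(1) tf(2)])
        fix r assume r: "r \<in> {ttg \<tau> (Suc j) i..ttg \<tau> (Suc j) (Suc i)}"
        have r1: "r \<in> {0..\<tau>}" using r tf(1)[of "Suc j" i] tf(3)[OF i] by auto
        have r2: "ttg \<tau> (Suc j) i \<in> {0..\<tau>}" using tf(1)[of "Suc j" i] tf(2)[of "Suc j" i] tf(3)[OF i] by auto
        have a1: "0 \<le> r - ttg \<tau> (Suc j) i" "r - ttg \<tau> (Suc j) i \<le> \<tau> / real (Suc j)"
          using r tf(4)[of "Suc j" i] by auto
        have "dist r (ttg \<tau> (Suc j) i) < d" unfolding dist_real_def using a1 step by linarith
        then show "\<bar>Y r \<omega> - Y (ttg \<tau> (Suc j) i) \<omega>\<bar> \<le> e/2" using dd[OF r2 r1] by (simp add: dist_real_def)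
      qed
      hence "mmax \<tau> (Suc j) \<omega> \<le> e/2" unfolding mmax_def by (subst Max_le_iff) auto
      moreover have "0 \<le> mmax \<tau> (Suc j) \<omega>" using mmax_props(2)[OF \<tau> zero_less_Suc[of j] w] by simp
      ultimately show "norm (mmax \<tau> (Suc j) \<omega> - 0) < e" using e by simp
    qed
  qed
  have "(\<lambda>j. \<integral>\<omega>. mmax \<tau> (Suc j) \<omega> \<partial>M) \<longlonglongrightarrow> (\<integral>\<omega>. 0 \<partial>M)"
  proof (rule integral_dominated_convergence[where w="\<lambda>_. 1"])
    show "(\<lambda>\<omega>. 0::real) \<in> borel_measurable M" by simp
    show "mmax \<tau> (Suc j) \<in> borel_measurable M" for j using mmax_props(1)[OF \<tau> zero_less_Suc[of j]] by simp
    show "integrable M (\<lambda>_. 1::real)" by simp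
    show "AE \<omega> in M. (\<lambda>j. mmax \<tau> (Suc j) \<omega>) \<longlonglongrightarrow> 0" by (rule AE_I2) (rule pt)
    show "AE \<omega> in M. norm (mmax \<tau> (Suc j) \<omega>) \<le> 1" for j
    proof (rule AE_I2)
      fix \<omega> assume "\<omega> \<in> space M"
      from mmax_props(2)[OF \<tau> zero_less_Suc[of j] this] show "norm (mmax \<tau> (Suc j) \<omega>) \<le> 1" by simp
    qed
  qed
  then have "(\<lambda>j. \<integral>\<omega>. mmax \<tau> (Suc j) \<omega> \<partial>M) \<longlonglongrightarrow> 0" by simp
  then show ?thesis by (rule LIMSEQ_imp_Suc)
qed

end

context M1 begin

lemma lam_bound:
  fixes \<tau> lm a :: real
  assumes \<tau>: "0 < \<tau>" and lam: "0 < lm" and a: "0 < a" "a < 1"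
  shows "exp (-(1/(1/lm + g*(1-a)/4*\<tau>)) * y0) - y0 * (3/a) * exp (-a * (1/(1/lm + g*(1-a)/4*\<tau>)))
         \<le> (\<integral>\<omega>. exp (-lm * Y \<tau> \<omega>) \<partial>M)"
  (is "?B \<le> ?E")
proof (rule field_le_epsilon)
  fix e :: real assume e: "0 < e"
  define c where "c = g*(1-a)/4"
  have c0: "0 < c" unfolding c_def using gpos a by simp
  define K where "K = lm^3/e"
  have K: "0 < K" unfolding K_def using lam e by simp
  define C1 where "C1 = g*lm^2/2*\<tau> + lm^3/6*(K/4)"
  have C1: "0 \<le> C1" unfolding C1_def using gpos lam \<tau> K by simp
  define d where "d = e / (2*(C1+1))"
  have d: "0 < d" unfolding d_def using e C1 by simp
  define Em where "Em n = (\<integral>\<omega>. mmax \<tau> n \<omega> \<partial>M)" for n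
  have ev1: "eventually (\<lambda>n. Em n < d) sequentially"
    using order_tendstoD(2)[OF mmax_lim[OF \<tau>] d] unfolding Em_def .
  have ev2: "eventually (\<lambda>n. c*\<tau>*lm^2 + 1 \<le> real n) sequentially"
  proof -
    obtain N :: nat where "c*\<tau>*lm^2 + 1 \<le> N" using real_arch_simple by blast
    then show ?thesis unfolding eventually_sequentially by (intro exI[of _ N]) auto
  qed
  obtain n where n1: "Em n < d" and n2: "c*\<tau>*lm^2 + 1 \<le> real n"
    using eventually_happens[OF eventually_conj[OF ev1 ev2]] by auto
  have cl: "0 \<le> c*\<tau>*lm^2" using c0 \<tau> by simp
  have n: "0 < n" using n2 cl by linarith
  have small: "g*(1-a)/4 * (\<tau>/n) * lm^2 \<le> 1"
  proof -
    have "c*\<tau>*lm^2 \<le> real n" using n2 by linarith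
    then show ?thesis unfolding c_def[symmetric] using n by (simp add: field_simps)
  qed
  note GB = grid_bound[OF \<tau> n lam a small]
  note tf = ttg_facts[OF less_imp_le[OF \<tau>], of n]
  note mp = mmax_props[OF \<tau> n]
  have th0: "thg lm (g*(1-a)/4) \<tau> n 0 = 1/(1/lm + g*(1-a)/4*\<tau>)" unfolding thg_def ttg_def by simp
  have Em0: "0 \<le> Em n" unfolding Em_def by (intro integral_nonneg_AE AE_I2) (use mp(2) in auto)
  have im: "integrable M (mmax \<tau> n)" by (rule bint[where B=1]) (use mp(1,2) in auto)
  have EO: "(\<Sum>i<n. \<integral>\<omega>. oscf (ttg \<tau> n i) (ttg \<tau> n (Suc i)) \<omega> \<partial>M) \<le> real n * Em n"
  proof -
    have "(\<Sum>i<n. \<integral>\<omega>. oscf (ttg \<tau> n i) (ttg \<tau> n (Suc i)) \<omega> \<partial>M) \<le> (\<Sum>i<n. Em n)"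
    proof (rule sum_mono)
      fix i assume "i \<in> {..<n}"
      hence i: "i < n" by simp
      have io: "integrable M (oscf (ttg \<tau> n i) (ttg \<tau> n (Suc i)))"
        by (rule bint[where B=1]) (use osc_meas[OF tf(1) tf(2)] osc_nonneg[OF _ tf(1) tf(2)] osc_le1[OF _ tf(1) tf(2)] in auto)
      show "(\<integral>\<omega>. oscf (ttg \<tau> n i) (ttg \<tau> n (Suc i)) \<omega> \<partial>M) \<le> Em n"
        unfolding Em_def by (rule integral_mono[OF io im]) (rule mp(3)[OF _ i])
    qed
    then show ?thesis by simp
  qed
  have ED: "(\<Sum>i<n. \<integral>\<omega>. \<bar>Y (ttg \<tau> n (Suc i)) \<omega> - Y (ttg \<tau> n i) \<omega>\<bar>^3 \<partial>M) \<le> 3/K + K/4 * Em n"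
    unfolding Em_def by (rule cubic_bound[of "ttg \<tau> n", OF tf(1) tf(2) mp(1) mp(2) mp(4) K])
  have T1: "g*lm^2/2*(\<tau>/n) * (\<Sum>i<n. \<integral>\<omega>. oscf (ttg \<tau> n i) (ttg \<tau> n (Suc i)) \<omega> \<partial>M) \<le> g*lm^2/2*\<tau> * Em n"
  proof -
    have "g*lm^2/2*(\<tau>/n) * (\<Sum>i<n. \<integral>\<omega>. oscf (ttg \<tau> n i) (ttg \<tau> n (Suc i)) \<omega> \<partial>M) \<le> g*lm^2/2*(\<tau>/n) * (real n * Em n)"
      using EO gpos \<tau> by (intro mult_left_mono) auto
    also have "\<dots> = g*lm^2/2*\<tau> * Em n" using n by simp
    finally show ?thesis .
  qed
  have T2: "lm^3/6 * (\<Sum>i<n. \<integral>\<omega>. \<bar>Y (ttg \<tau> n (Suc i)) \<omega> - Y (ttg \<tau> n i) \<omega>\<bar>^3 \<partial>M) \<le> lm^3/6 * (3/K + K/4 * Em n)"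
    using ED lam by (intro mult_left_mono) auto
  have T3: "lm^3/6 * (3/K + K/4 * Em n) = e/2 + lm^3/6*(K/4) * Em n"
    unfolding K_def using e lam by (simp add: field_simps power3_eq_cube)
  have "C1 * Em n \<le> C1 * d" using n1 C1 by (intro mult_left_mono) auto
  also have "\<dots> \<le> e/2" unfolding d_def using C1 e by (simp add: field_simps)
  finally have T4: "C1 * Em n \<le> e/2" .
  have "g*lm^2/2*\<tau> * Em n + lm^3/6*(K/4) * Em n = C1 * Em n" unfolding C1_def by (simp add: algebra_simps)
  then show "?B \<le> ?E + e" using GB[unfolded th0] T1 T2 T3 T4 by linarith
qed

end

context M1 begin

theorem M1_pos:
  assumes T: "0 < T"
  shows "\<exists>\<tau>. 0 < \<tau> \<and> \<tau> \<le> T \<and> 0 < measure M {\<omega> \<in> space M. Y \<tau> \<omega> = 0}"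
proof -
  define a where "a = (1 + y0)/2"
  define b where "b = (a + y0)/2"
  define c where "c = g*(1-a)/4"
  have a: "0 < a" "a < 1" "y0 < a" unfolding a_def using y0 by auto
  have b: "y0 < b" "b < a" "0 < b" unfolding b_def using a y0 by auto
  have c: "0 < c" unfolding c_def using gpos a by simp
  define \<tau> where "\<tau> = min T ((b - y0)/(3*c))"
  have \<tau>: "0 < \<tau>" "\<tau> \<le> T" unfolding \<tau>_def using T b c by auto
  define \<Theta> where "\<Theta> = 1/(c*\<tau>)"
  have \<Theta>: "0 < \<Theta>" unfolding \<Theta>_def using c \<tau> by simp
  have \<Theta>3: "3 \<le> (b - y0) * \<Theta>"
  proof -
    have "\<tau> \<le> (b - y0)/(3*c)" unfolding \<tau>_def by simp
    hence "3*c*\<tau> \<le> b - y0" using c by (simp add: field_simps)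
    then show ?thesis unfolding \<Theta>_def using c \<tau> by (simp add: field_simps)
  qed
  define \<Lambda> where "\<Lambda> = \<Theta> * b / (a - b)"
  have \<Lambda>: "0 < \<Lambda>" unfolding \<Lambda>_def using \<Theta> b by simp
  define c0 where "c0 = exp (-\<Theta> * y0) / 2"
  have c0: "0 < c0" unfolding c0_def by simp
  have LB: "c0 \<le> (\<integral>\<omega>. exp (-lm * Y \<tau> \<omega>) \<partial>M)" if lm: "\<Lambda> \<le> lm" for lm
  proof -
    have lm0: "0 < lm" using lm \<Lambda> by simp
    define \<theta>0 where "\<theta>0 = 1/(1/lm + g*(1-a)/4*\<tau>)"
    have den: "1/lm + g*(1-a)/4*\<tau> = 1/lm + 1/\<Theta>" unfolding \<Theta>_def c_def using c \<tau> by simp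
    have inv: "1/lm \<le> 1/\<Lambda>" using lm \<Lambda> by (simp add: frac_le)
    have "1/\<Lambda> = (a - b)/(b*\<Theta>)" unfolding \<Lambda>_def by simp
    moreover have "(a - b)/(b*\<Theta>) + 1/\<Theta> = a/(b*\<Theta>)" using b \<Theta> by (simp add: field_simps)
    ultimately have "1/lm + 1/\<Theta> \<le> a/(b*\<Theta>)" using inv by linarith
    moreover have Dp: "0 < 1/lm + 1/\<Theta>" using lm0 \<Theta> by (intro add_pos_pos) simp_all
    ultimately have "1/(a/(b*\<Theta>)) \<le> 1/(1/lm + 1/\<Theta>)" by (intro frac_le) auto
    hence t1: "b*\<Theta>/a \<le> \<theta>0" unfolding \<theta>0_def den by simp
    have "1/\<Theta> \<le> 1/lm + 1/\<Theta>" using lm0 by simp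
    hence "1/(1/lm + 1/\<Theta>) \<le> 1/(1/\<Theta>)" using \<Theta> by (intro frac_le) auto
    hence t2: "\<theta>0 \<le> \<Theta>" unfolding \<theta>0_def den by simp
    have e1: "exp (-\<Theta> * y0) \<le> exp (-\<theta>0 * y0)" using t2 y0 by (simp add: mult_right_mono)
    have "b*\<Theta> \<le> a*\<theta>0" using t1 a by (simp add: field_simps)
    hence e2: "exp (-a*\<theta>0) \<le> exp (-b*\<Theta>)" by simp
    have "exp (3::real) \<ge> 6" using exp_lower_Taylor_quadratic[of 3] by simp
    also have "exp 3 \<le> exp ((b - y0) * \<Theta>)" using \<Theta>3 by simp
    finally have e3: "6 \<le> exp ((b - y0) * \<Theta>)" .
    have "6 * y0 / a \<le> 6" using a y0 by (simp add: field_simps)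
    hence "6 * y0 / a \<le> exp ((b - y0) * \<Theta>)" using e3 by linarith
    hence "6 * y0 / a * exp (-b*\<Theta>) \<le> exp ((b - y0) * \<Theta>) * exp (-b*\<Theta>)" by (rule mult_right_mono) simp
    also have "\<dots> = exp (-\<Theta> * y0)" by (simp add: exp_add[symmetric] algebra_simps)
    finally have e4: "y0 * (3/a) * exp (-b*\<Theta>) \<le> exp (-\<Theta> * y0) / 2" by (simp add: field_simps)
    have "y0 * (3/a) * exp (-a*\<theta>0) \<le> y0 * (3/a) * exp (-b*\<Theta>)" using e2 y0 a by (intro mult_left_mono) auto
    hence "c0 \<le> exp (-\<theta>0 * y0) - y0 * (3/a) * exp (-a * \<theta>0)" unfolding c0_def using e1 e4 by linarith
    also have "\<dots> \<le> (\<integral>\<omega>. exp (-lm * Y \<tau> \<omega>) \<partial>M)" unfolding \<theta>0_def by (rule lam_bound[OF \<tau>(1) lm0 a(1,2)])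
    finally show ?thesis .
  qed
  define S where "S = {\<omega> \<in> space M. Y \<tau> \<omega> = 0}"
  have Ym[measurable]: "Y \<tau> \<in> borel_measurable M" using YM \<tau> by simp
  have Ssets: "S \<in> sets M" unfolding S_def by measurable
  have lim: "(\<lambda>j. \<integral>\<omega>. exp (-real j * Y \<tau> \<omega>) \<partial>M) \<longlonglongrightarrow> (\<integral>\<omega>. indicator S \<omega> \<partial>M)"
  proof (rule integral_dominated_convergence[where w="\<lambda>_. 1"])
    show "indicator S \<in> borel_measurable M" using Ssets by simp
    show "(\<lambda>\<omega>. exp (-real j * Y \<tau> \<omega>)) \<in> borel_measurable M" for j by measurable
    show "integrable M (\<lambda>_. 1::real)" by simp
    show "AE \<omega> in M. (\<lambda>j. exp (-real j * Y \<tau> \<omega>)) \<longlonglongrightarrow> indicator S \<omega>"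
    proof (rule AE_I2)
      fix \<omega> assume w: "\<omega> \<in> space M"
      show "(\<lambda>j. exp (-real j * Y \<tau> \<omega>)) \<longlonglongrightarrow> indicator S \<omega>"
      proof (cases "Y \<tau> \<omega> = 0")
        case True then show ?thesis unfolding S_def using w by simp
      next
        case False
        hence pos: "0 < Y \<tau> \<omega>" using Ybd[OF w, of \<tau>] \<tau> by auto
        have eq: "exp (-real j * Y \<tau> \<omega>) = exp (-Y \<tau> \<omega>) ^ j" for j
          by (simp add: exp_of_nat_mult[symmetric])
        have "(\<lambda>j. exp (-Y \<tau> \<omega>) ^ j) \<longlonglongrightarrow> 0" using pos by (intro LIMSEQ_power_zero) simp
        then show ?thesis unfolding eq S_def using False by simp
      qed
    qed
    show "AE \<omega> in M. norm (exp (-real j * Y \<tau> \<omega>)) \<le> 1" for j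
    proof (rule AE_I2)
      fix \<omega> assume w: "\<omega> \<in> space M"
      have "0 \<le> real j * Y \<tau> \<omega>" using Ybd[OF w, of \<tau>] \<tau> by simp
      then show "norm (exp (-real j * Y \<tau> \<omega>)) \<le> 1" by simp
    qed
  qed
  have "c0 \<le> (\<integral>\<omega>. indicator S \<omega> \<partial>M)"
  proof (rule LIMSEQ_le_const[OF lim])
    obtain N :: nat where "\<Lambda> \<le> N" using real_arch_simple by blast
    then show "\<exists>N. \<forall>j\<ge>N. c0 \<le> (\<integral>\<omega>. exp (-real j * Y \<tau> \<omega>) \<partial>M)"
      by (intro exI[of _ N] allI impI LB) simp
  qed
  also have "(\<integral>\<omega>. indicator S \<omega> \<partial>M) = measure M S" using Ssets by simp
  finally show ?thesis using c0 \<tau> unfolding S_def by (intro exI[of _ \<tau>]) auto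
qed

end

lemma simplex_facts:
  fixes x :: "real ^ 'n::finite"
  assumes "x \<in> unit_simplex"
  shows "0 \<le> x $ i" "x $ i \<le> 1" "(\<Sum>l\<in>UNIV - {k}. x $ l) = 1 - x $ k"
proof -
  have nn: "\<And>i. 0 \<le> x $ i" and s: "(\<Sum>i\<in>UNIV. x $ i) = 1" using assms unfolding unit_simplex_def by auto
  show "0 \<le> x $ i" by (rule nn)
  have "x $ i \<le> (\<Sum>i\<in>UNIV. x $ i)" by (rule member_le_sum) (use nn in auto)
  then show "x $ i \<le> 1" using s by simp
  have "(\<Sum>i\<in>UNIV. x $ i) = x $ k + (\<Sum>l\<in>UNIV - {k}. x $ l)" by (rule sum.remove) auto
  then show "(\<Sum>l\<in>UNIV - {k}. x $ l) = 1 - x $ k" using s by simp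
qed

theorem mainTheorem11:
  fixes \<gamma> :: "'n::finite \<Rightarrow> 'n \<Rightarrow> real"
    and M :: "'a measure" and F :: "real \<Rightarrow> 'a measure"
    and X :: "real \<Rightarrow> 'a \<Rightarrow> real ^ 'n"
    and \<mu>0 :: "real ^ 'n" and T :: real and k :: 'n
  assumes "CARD('n) \<ge> 2"
    and "\<And>i j. \<gamma> i j = \<gamma> j i"
    and "\<And>i. \<gamma> i i = 0"
    and "\<And>i j. i \<noteq> j \<Longrightarrow> \<gamma> i j > 0"
    and "is_simplex_diffusion_martingale M F \<gamma> X"
    and "\<mu>0 \<in> unit_simplex_interior"
    and "\<And>\<omega>. \<omega> \<in> space M \<Longrightarrow> X 0 \<omega> = \<mu>0"
    and "T > 0"
  shows "measure M {\<omega> \<in> space M. \<exists>t\<in>{0..T}. X t \<omega> $ k = 0} > 0"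
proof -
  note card = assms(1) and gp = assms(4) and SD = assms(5) and mu = assms(6) and X0 = assms(7) and T = assms(8)
  have prob: "prob_space M" and filt: "is_filtration M F"
    and Xc: "\<And>\<omega>. \<omega> \<in> space M \<Longrightarrow> continuous_on {0..} (\<lambda>t. X t \<omega>)"
    and Xs: "\<And>\<omega> t. \<omega> \<in> space M \<Longrightarrow> 0 \<le> t \<Longrightarrow> X t \<omega> \<in> unit_simplex"
    and mX: "is_martingale M F (\<lambda>t \<omega>. X t \<omega> $ k)"
    and mQ: "is_martingale M F (\<lambda>t \<omega>. X t \<omega> $ k * X t \<omega> $ k - integral {0..t} (\<lambda>s. simplex_diffusion \<gamma> (X s \<omega>) k k))"
    using SD unfolding is_simplex_diffusion_martingale_def by auto
  define R where "R = (UNIV - {k} :: 'n set)"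
  have Rne: "R \<noteq> {}"
  proof
    assume "R = {}"
    hence "(UNIV :: 'n set) = {k}" unfolding R_def by auto
    hence "card (UNIV :: 'n set) = card {k}" by (rule arg_cong)
    hence "CARD('n) = 1" by simp
    with card show False by simp
  qed
  have Rfin: "finite R" by simp
  define g where "g = Min ((\<lambda>l. \<gamma> k l) ` R)"
  have gle: "g \<le> \<gamma> k l" if "l \<in> R" for l unfolding g_def using that Rfin by (intro Min_le) auto
  have gpos: "0 < g"
  proof -
    have "g \<in> (\<lambda>l. \<gamma> k l) ` R" unfolding g_def using Rne Rfin by (intro Min_in) auto
    then obtain l where "l \<in> R" "g = \<gamma> k l" by auto
    then show ?thesis using gp[of k l] unfolding R_def by auto
  qed
  have y0: "0 < \<mu>0 $ k" "\<mu>0 $ k < 1"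
  proof -
    have pos: "\<And>i. 0 < \<mu>0 $ i" and s: "(\<Sum>i\<in>UNIV. \<mu>0 $ i) = 1" using mu unfolding unit_simplex_interior_def by auto
    show "0 < \<mu>0 $ k" by (rule pos)
    have "\<mu>0 \<in> unit_simplex" using mu unfolding unit_simplex_interior_def unit_simplex_def by (auto intro: less_imp_le)
    hence "(\<Sum>l\<in>R. \<mu>0 $ l) = 1 - \<mu>0 $ k" unfolding R_def by (rule simplex_facts(3))
    moreover have "0 < (\<Sum>l\<in>R. \<mu>0 $ l)" using Rne Rfin pos by (intro sum_pos) auto
    ultimately show "\<mu>0 $ k < 1" by simp
  qed
  define A where "A t \<omega> = integral {0..t} (\<lambda>s. simplex_diffusion \<gamma> (X s \<omega>) k k)" for t \<omega>
  have sdk: "simplex_diffusion \<gamma> x k k = (\<Sum>l\<in>R. \<gamma> k l * x $ k * x $ l)" for x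
    unfolding simplex_diffusion_def R_def by simp
  interpret M1 M F "\<lambda>t \<omega>. X t \<omega> $ k" A "\<mu>0 $ k" g
  proof (rule M1.intro)
    show "prob_space M" by (rule prob)
    show "is_filtration M F" by (rule filt)
    show "is_martingale M F (\<lambda>t \<omega>. X t \<omega> $ k)" by (rule mX)
    show "is_martingale M F (\<lambda>t \<omega>. X t \<omega> $ k * X t \<omega> $ k - A t \<omega>)" unfolding A_def by (rule mQ)
    show "0 \<le> X t \<omega> $ k \<and> X t \<omega> $ k \<le> 1" if "\<omega> \<in> space M" "0 \<le> t" for \<omega> t
      using simplex_facts(1,2)[OF Xs[OF that]] by auto
    show "continuous_on {0..} (\<lambda>t. X t \<omega> $ k)" if "\<omega> \<in> space M" for \<omega>
      using Xc[OF that] by (rule continuous_on_component)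
    show "X 0 \<omega> $ k = \<mu>0 $ k" if "\<omega> \<in> space M" for \<omega> using X0[OF that] by simp
    show "0 < g" by (rule gpos)
    show "0 < \<mu>0 $ k" "\<mu>0 $ k < 1" by (rule y0)+
  next
    fix \<omega> s t L
    assume w: "\<omega> \<in> space M" and st: "0 \<le> s" "s \<le> t" and HL: "\<And>r. r \<in> {s..t} \<Longrightarrow> L \<le> X r \<omega> $ k * (1 - X r \<omega> $ k)"
    define f where "f r = simplex_diffusion \<gamma> (X r \<omega>) k k" for r
    have fc: "continuous_on {0..} f" unfolding f_def sdk
      by (intro continuous_intros continuous_on_component Xc[OF w])
    have fi: "f integrable_on {0..t}"
      by (rule integrable_continuous_interval) (rule continuous_on_subset[OF fc], auto)
    have "A t \<omega> - A s \<omega> = integral {s..t} f"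
      using Henstock_Kurzweil_Integration.integral_combine[OF st fi] unfolding A_def f_def[symmetric] by simp
    moreover have "g * (t - s) * L \<le> integral {s..t} f"
    proof -
      have fi2: "f integrable_on {s..t}"
        by (rule integrable_continuous_interval) (rule continuous_on_subset[OF fc], use st in auto)
      have "integral {s..t} (\<lambda>_. g * L) \<le> integral {s..t} f"
      proof (rule integral_le[OF _ fi2])
        show "(\<lambda>_. g * L) integrable_on {s..t}" by (intro integrable_continuous_interval continuous_on_const)
        fix r assume r: "r \<in> {s..t}"
        have r0: "0 \<le> r" using r st by auto
        have xs: "X r \<omega> \<in> unit_simplex" by (rule Xs[OF w r0])
        have "(\<Sum>l\<in>R. g * X r \<omega> $ k * X r \<omega> $ l) \<le> (\<Sum>l\<in>R. \<gamma> k l * X r \<omega> $ k * X r \<omega> $ l)"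
        proof (rule sum_mono)
          fix l assume l: "l \<in> R"
          have "0 \<le> X r \<omega> $ k * X r \<omega> $ l" using simplex_facts(1)[OF xs] by simp
          then show "g * X r \<omega> $ k * X r \<omega> $ l \<le> \<gamma> k l * X r \<omega> $ k * X r \<omega> $ l"
            using gle[OF l] by (simp add: mult.assoc mult_right_mono)
        qed
        moreover have "(\<Sum>l\<in>R. g * X r \<omega> $ k * X r \<omega> $ l) = g * (X r \<omega> $ k * (1 - X r \<omega> $ k))"
          using simplex_facts(3)[OF xs, of k] unfolding R_def[symmetric]
          by (simp add: sum_distrib_left[symmetric] mult.assoc)
        moreover have "g * L \<le> g * (X r \<omega> $ k * (1 - X r \<omega> $ k))" using HL[OF r] gpos by simp
        ultimately show "g * L \<le> f r" unfolding f_def sdk by linarith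
      qed
      then show ?thesis using st by (simp add: algebra_simps)
    qed
    ultimately show "g * (t - s) * L \<le> A t \<omega> - A s \<omega>" by simp
  qed
  obtain \<tau> where \<tau>: "0 < \<tau>" "\<tau> \<le> T" and pos: "0 < measure M {\<omega> \<in> space M. X \<tau> \<omega> $ k = 0}"
    using M1_pos[OF T] by auto
  define Tg where "Tg = {\<omega> \<in> space M. \<exists>t\<in>{0..T}. X t \<omega> $ k = 0}"
  define Q where "Q = {0..T} \<inter> (\<rat> :: real set)"
  have Tg_eq: "Tg = {\<omega> \<in> space M. \<forall>m::nat. \<exists>q\<in>Q. X q \<omega> $ k < 1 / real (Suc m)}"
  proof (intro set_eqI iffI)
    fix \<omega> assume "\<omega> \<in> Tg"
    then obtain t where w: "\<omega> \<in> space M" and t: "t \<in> {0..T}" and z: "X t \<omega> $ k = 0" unfolding Tg_def by auto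
    have cT: "continuous_on {0..T} (\<lambda>r. X r \<omega> $ k)" using Ycont[OF w] by (rule continuous_on_subset) auto
    show "\<omega> \<in> {\<omega> \<in> space M. \<forall>m::nat. \<exists>q\<in>Q. X q \<omega> $ k < 1 / real (Suc m)}"
    proof (clarsimp simp: w)
      fix m :: nat
      show "\<exists>q\<in>Q. X q \<omega> $ k < 1 / (1 + real m)"
      proof (rule ccontr)
        assume nt: "\<not> ?thesis"
        have nq: "1/(1+real m) \<le> X q \<omega> $ k" if "q \<in> Q" for q using nt that by (auto simp: not_less)
        have cm: "continuous_on {0..T} (\<lambda>r. - X r \<omega> $ k)" by (rule continuous_on_minus[OF cT])
        have "- X t \<omega> $ k \<le> - (1 / (1 + real m))"
        proof (rule dense_cont_le[OF T cm _ t])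
          fix q assume "q \<in> {0..T} \<inter> \<rat>"
          hence "q \<in> Q" unfolding Q_def by simp
          then show "- X q \<omega> $ k \<le> - (1 / (1 + real m))" using nq by simp
        qed
        with z show False by simp
      qed
    qed
  next
    fix \<omega> assume "\<omega> \<in> {\<omega> \<in> space M. \<forall>m::nat. \<exists>q\<in>Q. X q \<omega> $ k < 1 / real (Suc m)}"
    hence w: "\<omega> \<in> space M" and H: "\<And>m::nat. \<exists>q\<in>Q. X q \<omega> $ k < 1 / real (Suc m)" by auto
    have cT: "continuous_on {0..T} (\<lambda>r. X r \<omega> $ k)" using Ycont[OF w] by (rule continuous_on_subset) auto
    obtain t0 where t0: "t0 \<in> {0..T}" and mn: "\<And>r. r \<in> {0..T} \<Longrightarrow> X t0 \<omega> $ k \<le> X r \<omega> $ k"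
      using continuous_attains_inf[OF compact_Icc _ cT] T by auto
    show "\<omega> \<in> Tg"
    proof (rule ccontr)
      assume "\<omega> \<notin> Tg"
      hence "X t0 \<omega> $ k \<noteq> 0" using w t0 unfolding Tg_def by auto
      moreover have "0 \<le> X t0 \<omega> $ k" using Ybd[OF w, of t0] t0 by auto
      ultimately have p: "0 < X t0 \<omega> $ k" by simp
      obtain m :: nat where m: "inverse (real (Suc m)) < X t0 \<omega> $ k" using reals_Archimedean[OF p] by auto
      obtain q where q: "q \<in> Q" "X q \<omega> $ k < 1 / real (Suc m)" using H[of m] by auto
      have "X t0 \<omega> $ k \<le> X q \<omega> $ k" using mn q(1) unfolding Q_def by auto
      with q(2) m show False by (simp add: inverse_eq_divide)
    qed
  qed
  have Tg_sets: "Tg \<in> sets M"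
    unfolding Tg_eq
  proof (rule sets.sets_Collect_countable_All)
    fix m :: nat
    show "{\<omega> \<in> space M. \<exists>q\<in>Q. X q \<omega> $ k < 1 / real (Suc m)} \<in> sets M"
    proof (rule sets.sets_Collect_countable_Ex')
      show "countable Q" unfolding Q_def by (simp add: countable_Int2 countable_rat)
      fix q assume "q \<in> Q"
      hence q0: "0 \<le> q" unfolding Q_def by auto
      have [measurable]: "(\<lambda>\<omega>. X q \<omega> $ k) \<in> borel_measurable M" by (rule YM[OF q0])
      show "{\<omega> \<in> space M. X q \<omega> $ k < 1 / real (Suc m)} \<in> sets M" by measurable
    qed
  qed
  have sub: "{\<omega> \<in> space M. X \<tau> \<omega> $ k = 0} \<subseteq> Tg" unfolding Tg_def using \<tau> by auto
  have "measure M {\<omega> \<in> space M. X \<tau> \<omega> $ k = 0} \<le> measure M Tg"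
    by (rule finite_measure_mono[OF sub Tg_sets])
  with pos show ?thesis unfolding Tg_def by simp
qed


end
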